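(* Let $\nu\in\mathbb{N}$ and for $i=1,2$ let $$f_i(\lambda)=\frac{\sigma_i^2}{2\pi}\,|1-e^{i\lambda}|^{-2d_i},\qquad \lambda\in(-\pi,\pi],$$ with $0<\sigma_i^2<\infty$ and $0<d_i<1/2$ (spectral densities of ARFIMA$(0,d_i,0)$ processes). Define $$\Delta_{\nu,B}(T):=\left|\frac1T\,\mathrm{tr}\big[B_T(f_1)B_T(f_2)\big]^\nu-(2\pi)^{2\nu-1}\int_{-\pi}^{\pi}[f_1(\lambda)f_2(\lambda)]^\nu\,d\lambda\right|.$$ If $d:=d_1+d_2<1/(2\nu)$, then for any $\varepsilon>0$, $\Delta_{\nu,B}(T)=O(T^{-\gamma+\varepsilon})$ as $T\to\infty$, where $\gamma=\frac1{2\nu}-(d_1+d_2)$.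
   Context: For an integrable real even function $f$ on $(-\pi,\pi]$, $\hat f(t)=\int_{-\pi}^{\pi}e^{i\lambda t}f(\lambda)\,d\lambda$ ($t\in\mathbb{Z}$), and $B_T(f)$ is the $T\times T$ Toeplitz matrix $(\hat f(s-t))_{s,t=1,\dots,T}$, $T\in\mathbb{N}$. *)

theory Defs
  imports "HOL-Analysis.Analysis" "HOL-Library.Landau_Symbols" "Jordan_Normal_Form.Matrix"
begin

definition arfima_sd :: "real \<Rightarrow> real \<Rightarrow> real \<Rightarrow> real" where
  "arfima_sd s2 d x = s2 / (2 * pi) * cmod (1 - exp (\<i> * complex_of_real x)) powr (- 2 * d)"

definition fcoeff :: "(real \<Rightarrow> real) \<Rightarrow> int \<Rightarrow> complex" where
  "fcoeff f t = (LINT x:{-pi<..pi}|lborel. exp (\<i> * complex_of_real x * of_int t) * complex_of_real (f x))"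

text \<open>Toeplitz matrix B_T(f) = (hat f(s - t))_{s,t=1..T} (indices shifted to 0..T-1).\<close>
definition toeplitz :: "nat \<Rightarrow> (real \<Rightarrow> real) \<Rightarrow> complex mat" where
  "toeplitz T f = mat T T (\<lambda>(s, t). fcoeff f (int s - int t))"

definition mat_trace :: "complex mat \<Rightarrow> complex" where
  "mat_trace A = (\<Sum>i<dim_row A. A $$ (i, i))"

definition Delta :: "nat \<Rightarrow> (real \<Rightarrow> real) \<Rightarrow> (real \<Rightarrow> real) \<Rightarrow> nat \<Rightarrow> real" where
  "Delta \<nu> f1 f2 T = cmod (mat_trace ((toeplitz T f1 * toeplitz T f2) ^\<^sub>m \<nu>) / of_nat T
      - complex_of_real ((2 * pi) ^ (2 * \<nu> - 1) * (LINT x:{-pi<..pi}|lborel. (f1 x * f2 x) ^ \<nu>)))"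

end

theory Submission
  imports Defs
begin

definition psi :: "real \<Rightarrow> nat \<Rightarrow> real" where
  "psi e n = pochhammer e n / fact n"

lemma psi_0[simp]: "psi e 0 = 1" by (simp add: psi_def)

lemma psi_Suc: "psi e (Suc n) = psi e n * ((e + real n) / (real n + 1))"
  by (simp add: psi_def pochhammer_Suc field_simps)

lemma psi_nonneg: "0 \<le> e \<Longrightarrow> 0 \<le> psi e n"
  unfolding psi_def by (cases "e = 0") (auto simp: pochhammer_0_left intro!: divide_nonneg_pos pochhammer_nonneg)

lemma psi_mono: assumes "0 \<le> e" "e \<le> 1" shows "psi e (Suc n) \<le> psi e n"
proof -
  have "(e + real n) / (real n + 1) \<le> 1" using assms by simp
  moreover have "0 \<le> psi e n" using psi_nonneg assms by simp
  ultimately show ?thesis unfolding psi_Suc by (rule mult_left_le)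
qed

lemma psi_antimono: assumes "0 \<le> e" "e \<le> 1" "m \<le> n" shows "psi e n \<le> psi e m"
  using assms(3)
proof (induction n)
  case 0 then show ?case by simp
next
  case (Suc n)
  show ?case
  proof (cases "m = Suc n")
    case False
    then have "m \<le> n" using Suc by simp
    then show ?thesis using Suc.IH psi_mono[OF assms(1,2), of n] by linarith
  qed simp
qed

lemma psi_conv: "psi (a + b) n = (\<Sum>k\<le>n. psi a k * psi b (n - k))"
proof -
  have "psi (a + b) n = (\<Sum>k\<le>n. of_nat (n choose k) * pochhammer a k * pochhammer b (n - k)) / fact n"
    by (simp add: psi_def pochhammer_binomial_sum)
  also have "\<dots> = (\<Sum>k\<le>n. of_nat (n choose k) * pochhammer a k * pochhammer b (n - k) / fact n)"
    by (simp add: sum_divide_distrib)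
  also have "\<dots> = (\<Sum>k\<le>n. psi a k * psi b (n - k))"
  proof (rule sum.cong[OF refl])
    fix k assume "k \<in> {..n}"
    then have kn: "k \<le> n" by simp
    show "of_nat (n choose k) * pochhammer a k * pochhammer b (n - k) / fact n = psi a k * psi b (n - k)"
      unfolding binomial_fact[OF kn] psi_def by (simp add: field_simps)
  qed
  finally show ?thesis .
qed

lemma psi_bound_exp: assumes "0 \<le> e" "e \<le> 1" shows "psi e n \<le> exp (- (1 - e) * harm n)"
proof (induction n)
  case 0 then show ?case by (simp add: harm_def)
next
  case (Suc n)
  have q: "(e + real n) / (real n + 1) = 1 + (- (1 - e) / (real n + 1))"
    by (simp add: field_simps)
  have q0: "0 \<le> (e + real n) / (real n + 1)" using assms by simp
  have "(e + real n) / (real n + 1) \<le> exp (- (1 - e) / (real n + 1))"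
    unfolding q by (rule exp_ge_add_one_self)
  then have "psi e (Suc n) \<le> exp (- (1 - e) * harm n) * exp (- (1 - e) / (real n + 1))"
    unfolding psi_Suc using Suc.IH psi_nonneg[OF assms(1)] q0
    by (intro mult_mono) auto
  also have "\<dots> = exp (- (1 - e) * harm (Suc n))"
    by (simp add: harm_Suc exp_add[symmetric] field_simps)
  finally show ?case .
qed

lemma psi_bound: assumes "0 \<le> e" "e \<le> 1" shows "psi e n \<le> (real n + 1) powr (e - 1)"
proof -
  have "psi e n \<le> exp (- (1 - e) * harm n)" by (rule psi_bound_exp[OF assms])
  also have "\<dots> \<le> exp (- (1 - e) * ln (real n + 1))"
    using harm_ge_ln[of n] assms by (intro exp_le_cancel_iff[THEN iffD2]) (simp add: mult_left_mono_neg)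
  also have "\<dots> = (real n + 1) powr (e - 1)"
    by (simp add: powr_def)
  finally show ?thesis .
qed

lemma psi_gen:
  fixes z :: complex assumes "norm z < 1"
  shows "(\<lambda>n. complex_of_real (psi e n) * z ^ n) sums (1 - z) powr (- complex_of_real e)"
proof -
  have "(\<lambda>n. ((- of_real e) gchoose n) * (- z) ^ n) sums (1 + (- z)) powr (- complex_of_real e)"
    by (rule gen_binomial_complex) (use assms in simp)
  moreover have "((- complex_of_real e) gchoose n) * (- z) ^ n = complex_of_real (psi e n) * z ^ n" for n
  proof -
    have "((- complex_of_real e) gchoose n) = (- 1) ^ n * pochhammer (of_real e) n / fact n"
      by (subst gbinomial_pochhammer) simp
    moreover have "(- z) ^ n = (- 1) ^ n * z ^ n" by (rule power_minus)
    ultimately have "((- complex_of_real e) gchoose n) * (- z) ^ n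
        = ((- 1) ^ n * (- 1) ^ n) * (pochhammer (of_real e) n / fact n) * z ^ n"
      by (simp only: mult.assoc mult.left_commute times_divide_eq_right times_divide_eq_left)
    also have "\<dots> = complex_of_real (psi e n) * z ^ n"
      by (simp add: psi_def pochhammer_of_real[symmetric] power_mult_distrib[symmetric])
    finally show ?thesis .
  qed
  ultimately show ?thesis by simp
qed

lemma powr_mvt:
  fixes x p :: real assumes "x > 0"
  shows "\<exists>\<xi>. x < \<xi> \<and> \<xi> < x + 1 \<and> (x + 1) powr p - x powr p = p * \<xi> powr (p - 1)"
proof -
  have "\<exists>z::real. x < z \<and> z < x + 1 \<and> ((x + 1) powr p - x powr p = ((x + 1) - x) * (p * z powr (p - 1)))"
    by (rule MVT2) (use assms in \<open>auto intro!: has_real_derivative_powr\<close>)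
  then show ?thesis by auto
qed

lemma step_L1:
  assumes "0 < a" "a \<le> 1"
  shows "a * (real j + 1) powr (a - 1) \<le> (real j + 1) powr a - real j powr a"
proof (cases "j = 0")
  case True then show ?thesis using assms by simp
next
  case False
  then have jp: "real j > 0" by simp
  obtain \<xi> where \<xi>: "real j < \<xi>" "\<xi> < real j + 1" "(real j + 1) powr a - real j powr a = a * \<xi> powr (a - 1)"
    using powr_mvt[OF jp] by blast
  have "(real j + 1) powr (a - 1) \<le> \<xi> powr (a - 1)"
    using \<xi> jp assms by (intro powr_mono2') auto
  then show ?thesis using \<xi>(3) assms by (simp add: mult_left_mono)
qed

lemma sum_L1:
  assumes "0 < a" "a \<le> 1"
  shows "(\<Sum>j<n. (real j + 1) powr (a - 1)) \<le> real n powr a / a"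
proof -
  have "a * (\<Sum>j<n. (real j + 1) powr (a - 1)) = (\<Sum>j<n. a * (real j + 1) powr (a - 1))"
    by (simp add: sum_distrib_left)
  also have "\<dots> \<le> (\<Sum>j<n. real (Suc j) powr a - real j powr a)"
    using step_L1[OF assms] by (intro sum_mono) (simp add: add.commute)
  also have "\<dots> = real n powr a"
    by (subst sum_lessThan_telescope[where f = "\<lambda>j. real j powr a"]) simp
  finally show ?thesis using assms by (simp add: field_simps)
qed

lemma step_L2:
  fixes x b :: real
  assumes "1 < b" "x > 0"
  shows "(x + 1) powr (- b) \<le> (x powr (1 - b) - (x + 1) powr (1 - b)) / (b - 1)"
proof -
  obtain \<xi> where \<xi>: "x < \<xi>" "\<xi> < x + 1" "(x + 1) powr (1 - b) - x powr (1 - b) = (1 - b) * \<xi> powr (1 - b - 1)"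
    using powr_mvt[OF assms(2)] by blast
  have "(x + 1) powr (- b) \<le> \<xi> powr (- b)"
    using \<xi> assms by (intro powr_mono2') auto
  moreover have "x powr (1 - b) - (x + 1) powr (1 - b) = (b - 1) * \<xi> powr (- b)"
    using \<xi>(3) by (simp add: algebra_simps)
  ultimately have "(b - 1) * (x + 1) powr (- b) \<le> x powr (1 - b) - (x + 1) powr (1 - b)"
    using assms by (simp add: mult_left_mono)
  then show ?thesis using assms by (simp add: pos_le_divide_eq mult.commute)
qed

lemma sum_L2:
  fixes b :: real
  assumes "1 < b" "0 < m"
  shows "summable (\<lambda>j. (real (j + m) + 1) powr (- b))"
    and "(\<Sum>j. (real (j + m) + 1) powr (- b)) \<le> real m powr (1 - b) / (b - 1)"
proof -
  define f where "f j = real (j + m) powr (1 - b) / (b - 1)" for j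
  have lim: "f \<longlonglongrightarrow> 0"
  proof -
    have "filterlim (\<lambda>j. real (j + m)) at_top sequentially"
      by (intro filterlim_subseq[unfolded comp_def, of "\<lambda>j. j + m"] filterlim_compose[OF filterlim_real_sequentially])
         (auto simp: strict_mono_def intro!: filterlim_add_const_nat_at_top)
    then have "(\<lambda>j. real (j + m) powr (1 - b)) \<longlonglongrightarrow> 0"
      using assms by (intro tendsto_neg_powr) auto
    then show ?thesis unfolding f_def by (intro tendsto_divide_zero)
  qed
  have s: "(\<lambda>j. f j - f (Suc j)) sums (f 0 - 0)"
    by (rule telescope_sums'[OF lim])
  have le: "(real (j + m) + 1) powr (- b) \<le> f j - f (Suc j)" for j
    using step_L2[OF assms(1), of "real (j + m)"] assms unfolding f_def
    by (simp add: diff_divide_distrib add.commute)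
  have nn: "0 \<le> (real (j + m) + 1) powr (- b)" for j by simp
  show sm: "summable (\<lambda>j. (real (j + m) + 1) powr (- b))"
    by (rule summable_comparison_test'[OF sums_summable[OF s], of 0]) (use le in auto)
  have "(\<Sum>j. (real (j + m) + 1) powr (- b)) \<le> (\<Sum>j. f j - f (Suc j))"
    by (rule suminf_le[OF le sm sums_summable[OF s]])
  also have "\<dots> = f 0" using s by (simp add: sums_iff)
  finally show "(\<Sum>j. (real (j + m) + 1) powr (- b)) \<le> real m powr (1 - b) / (b - 1)"
    by (simp add: f_def)
qed

definition Aco :: "real \<Rightarrow> nat \<Rightarrow> real" where
  "Aco e m = (\<Sum>j. psi e j * psi e (j + m))"

lemma psi_zero_exp: "psi 0 j = (if j = 0 then 1 else 0)"
  by (simp add: psi_def pochhammer_0_left)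

lemma summable_powr_shift: "s < -1 \<Longrightarrow> summable (\<lambda>j. (real j + 1) powr s)"
proof -
  assume "s < -1"
  then have "summable (\<lambda>n. real n powr s)" by (simp add: summable_real_powr_iff)
  then have "summable (\<lambda>n. real (Suc n) powr s)" by (subst summable_Suc_iff)
  then show ?thesis by (simp add: add.commute)
qed

lemma psi_prod_le:
  assumes "0 \<le> e" "e < 1/2"
  shows "psi e j * psi e (j + m) \<le> (real j + 1) powr (2 * e - 2)"
proof -
  have "psi e j * psi e (j + m) \<le> psi e j * psi e j"
    using psi_antimono[of e j "j + m"] psi_nonneg[of e j] assms by (intro mult_left_mono) auto
  also have "\<dots> \<le> (real j + 1) powr (e - 1) * (real j + 1) powr (e - 1)"
    using psi_bound[of e j] psi_nonneg[of e j] assms by (intro mult_mono) auto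
  also have "\<dots> = (real j + 1) powr (2 * e - 2)"
    by (simp add: powr_add[symmetric])
  finally show ?thesis .
qed

lemma psi_prod_summable:
  assumes "0 \<le> e" "e < 1/2"
  shows "summable (\<lambda>j. psi e j * psi e (j + m))"
  by (rule summable_comparison_test'[OF summable_powr_shift[of "2 * e - 2"], of 0])
     (use assms psi_prod_le[OF assms] psi_nonneg[of e] in auto)

lemma Aco_nonneg: "0 \<le> e \<Longrightarrow> e < 1/2 \<Longrightarrow> 0 \<le> Aco e m"
  unfolding Aco_def using psi_nonneg[of e] by (intro suminf_nonneg psi_prod_summable) auto

lemma Aco_0: "Aco 0 m = (if m = 0 then 1 else 0)"
proof -
  have "(\<lambda>j. psi 0 j * psi 0 (j + m)) = (\<lambda>j. if j = 0 then psi 0 m else 0)"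
    by (auto simp: psi_zero_exp)
  moreover have "(\<Sum>j. if j = 0 then psi 0 m else 0) = psi 0 m"
    by (rule sums_unique[symmetric]) (rule sums_single[of 0 "\<lambda>_. psi 0 m", simplified])
  ultimately show ?thesis unfolding Aco_def by (simp add: psi_zero_exp)
qed

lemma half_powr_le:
  assumes "m \<ge> 1" "p \<le> 0" "p \<ge> -1"
  shows "real m powr p \<le> 2 * (real m + 1) powr p"
proof -
  have "real m powr p \<le> ((real m + 1) / 2) powr p"
    using assms by (intro powr_mono2') auto
  also have "\<dots> = (real m + 1) powr p * 2 powr (- p)"
    proof -
    have "((real m + 1) / 2) powr p = (real m + 1) powr p / 2 powr p" by (rule powr_divide)
    also have "\<dots> = (real m + 1) powr p * 2 powr (- p)" by (simp add: powr_minus divide_inverse)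
    finally show ?thesis .
  qed
  also have "\<dots> \<le> (real m + 1) powr p * 2"
  proof -
    have "2 powr (- p) \<le> 2 powr (1::real)" using assms by (intro powr_mono) auto
    then show ?thesis by (intro mult_left_mono) auto
  qed
  finally show ?thesis by simp
qed

lemma Aco_bound_pos:
  assumes "0 < e" "e < 1/2"
  shows "Aco e m \<le> (1 / e + 3 / (1 - 2 * e) + 1) * (real m + 1) powr (2 * e - 1)"
proof -
  have e0: "0 \<le> e" using assms by simp
  define C where "C = 1 / e + 3 / (1 - 2 * e) + 1"
  have b: "1 < 2 - 2 * e" using assms by simp
  have inv: "1 / ((2 - 2 * e) - 1) = 1 / (1 - 2 * e)" by simp
  let ?f = "\<lambda>j. psi e j * psi e (j + m)"
  have sm: "summable ?f" by (rule psi_prod_summable[OF e0 assms(2)])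
  show ?thesis
  proof (cases "m = 0")
    case True
    have "Aco e m = (\<Sum>j. ?f (j + 1)) + (\<Sum>i<1. ?f i)"
      unfolding Aco_def by (rule suminf_split_initial_segment[OF sm])
    also have "(\<Sum>i<1. ?f i) = 1" using True by simp
    also have "(\<Sum>j. ?f (j + 1)) \<le> (\<Sum>j. (real (j + 1) + 1) powr (- (2 - 2 * e)))"
    proof (rule suminf_le)
      show "summable (\<lambda>j. ?f (j + 1))" using sm by (subst summable_iff_shift)
      show "summable (\<lambda>j. (real (j + 1) + 1) powr (- (2 - 2 * e)))" by (rule sum_L2(1)[OF b]) simp
      fix j show "?f (j + 1) \<le> (real (j + 1) + 1) powr (- (2 - 2 * e))"
        using psi_prod_le[OF e0 assms(2), of "j + 1" m] by simp
    qed
    also have "\<dots> \<le> real 1 powr (1 - (2 - 2 * e)) / ((2 - 2 * e) - 1)"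
      by (rule sum_L2(2)[OF b]) simp
    finally have "Aco e m \<le> 1 / (1 - 2 * e) + 1" by simp
    also have "\<dots> \<le> C"
    proof -
      have "1 / (1 - 2 * e) \<le> 3 / (1 - 2 * e)" using assms by (intro divide_right_mono) auto
      moreover have "0 \<le> 1 / e" using assms by simp
      ultimately show ?thesis unfolding C_def by linarith
    qed
    finally show ?thesis using True C_def by simp
  next
    case False
    then have m1: "m \<ge> 1" by simp
    have "Aco e m = (\<Sum>j. ?f (j + m)) + (\<Sum>j<m. ?f j)"
      unfolding Aco_def by (rule suminf_split_initial_segment[OF sm])
    also have "(\<Sum>j<m. ?f j) \<le> (\<Sum>j<m. (real j + 1) powr (e - 1) * (real m + 1) powr (e - 1))"
    proof (rule sum_mono)
      fix j assume "j \<in> {..<m}"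
      have "psi e (j + m) \<le> psi e m" using psi_antimono[of e m "j + m"] assms by simp
      also have "\<dots> \<le> (real m + 1) powr (e - 1)" using psi_bound[of e m] assms by simp
      finally show "?f j \<le> (real j + 1) powr (e - 1) * (real m + 1) powr (e - 1)"
        using psi_bound[of e j] psi_nonneg[of e] assms by (intro mult_mono) auto
    qed
    also have "\<dots> = (\<Sum>j<m. (real j + 1) powr (e - 1)) * (real m + 1) powr (e - 1)"
      by (simp add: sum_distrib_right)
    also have "\<dots> \<le> (real m powr e / e) * (real m + 1) powr (e - 1)"
      using sum_L1[of e m] assms by (intro mult_right_mono) auto
    also have "\<dots> \<le> ((real m + 1) powr e / e) * (real m + 1) powr (e - 1)"
      using assms by (intro mult_right_mono divide_right_mono powr_mono2) auto
    also have "\<dots> = (1 / e) * (real m + 1) powr (2 * e - 1)"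
      by (simp add: powr_add[symmetric])
    also have "(\<Sum>j. ?f (j + m)) \<le> (\<Sum>j. (real (j + m) + 1) powr (- (2 - 2 * e)))"
    proof (rule suminf_le)
      show "summable (\<lambda>j. ?f (j + m))" using sm by (subst summable_iff_shift)
      show "summable (\<lambda>j. (real (j + m) + 1) powr (- (2 - 2 * e)))" by (rule sum_L2(1)[OF b]) (use m1 in simp)
      fix j show "?f (j + m) \<le> (real (j + m) + 1) powr (- (2 - 2 * e))"
        using psi_prod_le[OF e0 assms(2), of "j + m" m] by simp
    qed
    also have "\<dots> \<le> real m powr (1 - (2 - 2 * e)) / ((2 - 2 * e) - 1)"
      by (rule sum_L2(2)[OF b]) (use m1 in simp)
    also have "\<dots> = real m powr (2 * e - 1) / (1 - 2 * e)" by simp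
    also have "\<dots> \<le> 2 * (real m + 1) powr (2 * e - 1) / (1 - 2 * e)"
      using half_powr_le[OF m1, of "2 * e - 1"] assms by (intro divide_right_mono) auto
    finally have A1: "Aco e m \<le> 2 * (real m + 1) powr (2 * e - 1) / (1 - 2 * e) + (1 / e) * (real m + 1) powr (2 * e - 1)"
      by simp
    have "2 * (real m + 1) powr (2 * e - 1) / (1 - 2 * e) + (1 / e) * (real m + 1) powr (2 * e - 1)
       = (2 / (1 - 2 * e) + 1 / e) * (real m + 1) powr (2 * e - 1)"
      by (simp add: distrib_right)
    with A1 have "Aco e m \<le> (2 / (1 - 2 * e) + 1 / e) * (real m + 1) powr (2 * e - 1)" by simp
    also have "\<dots> \<le> C * (real m + 1) powr (2 * e - 1)"
    proof (rule mult_right_mono)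
      have "2 / (1 - 2 * e) \<le> 3 / (1 - 2 * e)" using assms by (intro divide_right_mono) auto
      then show "2 / (1 - 2 * e) + 1 / e \<le> C" unfolding C_def by linarith
    qed simp
    finally show ?thesis unfolding C_def .
  qed
qed

lemma Aco_bound:
  assumes "0 \<le> e" "e < 1/2"
  shows "\<exists>C. \<forall>m. Aco e m \<le> C * (real m + 1) powr (2 * e - 1)"
proof (cases "e = 0")
  case True
  then show ?thesis by (intro exI[of _ 1]) (auto simp: Aco_0)
next
  case False
  then show ?thesis using Aco_bound_pos[of e] assms by (intro exI) auto
qed

lemma sin_lower:
  assumes "0 \<le> x" "x \<le> pi / 3"
  shows "x / 2 \<le> sin x"
proof (cases "x = 0")
  case False
  then have x0: "0 < x" using assms by simp
  obtain z where z: "0 < z" "z < x" "sin x - sin 0 = (x - 0) * cos z"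
    using MVT2[OF x0, of sin cos] by (auto intro: DERIV_sin)
  have "cos (pi / 3) \<le> cos z"
    using z assms by (intro cos_monotone_0_pi_le) auto
  then have "1 / 2 \<le> cos z" by (simp add: cos_60)
  then have "x * (1/2) \<le> x * cos z" using x0 by (intro mult_left_mono) auto
  then show ?thesis using z by simp
qed simp

lemma cmod_1_exp_lower:
  assumes "\<bar>x\<bar> \<le> pi"
  shows "\<bar>x\<bar> / (2 * pi) \<le> cmod (1 - exp (\<i> * complex_of_real x))"
proof -
  have re: "Re (1 - exp (\<i> * complex_of_real x)) = 1 - cos x" by (simp add: Re_exp)
  have im: "Im (1 - exp (\<i> * complex_of_real x)) = - sin x" by (simp add: Im_exp)
  have c1: "\<bar>1 - cos x\<bar> \<le> cmod (1 - exp (\<i> * complex_of_real x))"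
    using abs_Re_le_cmod[of "1 - exp (\<i> * complex_of_real x)"] re by simp
  have c2: "\<bar>sin x\<bar> \<le> cmod (1 - exp (\<i> * complex_of_real x))"
    using abs_Im_le_cmod[of "1 - exp (\<i> * complex_of_real x)"] im by simp
  have pi1: "\<bar>x\<bar> / (2 * pi) \<le> \<bar>x\<bar> / 2"
    using pi_ge_two by (intro divide_left_mono) auto
  show ?thesis
  proof (cases "\<bar>x\<bar> \<le> pi / 3")
    case True
    have "\<bar>x\<bar> / 2 \<le> sin \<bar>x\<bar>" using True by (intro sin_lower) auto
    also have "sin \<bar>x\<bar> = \<bar>sin x\<bar>"
    proof (cases "x \<ge> 0")
      case True then show ?thesis using sin_ge_zero[of x] assms by simp
    next
      case False then show ?thesis using sin_ge_zero[of "-x"] assms by simp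
    qed
    finally show ?thesis using pi1 c2 by linarith
  next
    case False
    have "cos \<bar>x\<bar> \<le> cos (pi / 3)"
      using False assms by (intro cos_monotone_0_pi_le) auto
    moreover have "cos \<bar>x\<bar> = cos x" by (cases "x \<ge> 0") auto
    ultimately have "cos x \<le> 1 / 2" by (simp add: cos_60)
    moreover have "\<bar>x\<bar> / (2 * pi) \<le> 1 / 2" using assms by (simp add: field_simps)
    ultimately show ?thesis using c1 by linarith
  qed
qed

definition wfun :: "real \<Rightarrow> real \<Rightarrow> real" where
  "wfun e x = cmod (1 - exp (\<i> * complex_of_real x)) powr (- 2 * e)"

lemma wfun_nonneg: "0 \<le> wfun e x" by (simp add: wfun_def)

lemma wfun_bound:
  assumes "0 < e" "\<bar>x\<bar> \<le> pi"
  shows "wfun e x \<le> (2 * pi) powr (2 * e) * \<bar>x\<bar> powr (- 2 * e)"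
proof (cases "x = 0")
  case True then show ?thesis by (simp add: wfun_def)
next
  case False
  then have xp: "0 < \<bar>x\<bar> / (2 * pi)" by simp
  have "wfun e x \<le> (\<bar>x\<bar> / (2 * pi)) powr (- 2 * e)"
    unfolding wfun_def using assms xp cmod_1_exp_lower[OF assms(2)] by (intro powr_mono2') auto
  also have "\<dots> = \<bar>x\<bar> powr (- 2 * e) / (2 * pi) powr (- 2 * e)"
    by (rule powr_divide)
  also have "\<dots> = (2 * pi) powr (2 * e) * \<bar>x\<bar> powr (- 2 * e)"
    by (simp add: powr_minus divide_inverse)
  finally show ?thesis .
qed

abbreviation "Api \<equiv> {-pi<..pi}"

lemma abs_powr_integrable:
  assumes "a > -1"
  shows "set_integrable lborel Api (\<lambda>x. \<bar>x\<bar> powr a)"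
proof -
  have "(\<lambda>x. x powr a) integrable_on {0<..pi}"
    by (rule integrable_on_powr_from_0'[OF assms]) simp
  then have "(\<lambda>x. x powr a) absolutely_integrable_on {0<..pi}"
    by (rule nonnegative_absolutely_integrable_1) simp
  then have "integrable lebesgue (\<lambda>x. indicator {0<..pi} x *\<^sub>R (x powr a))"
    by (simp add: set_integrable_def)
  then have i1: "integrable lborel (\<lambda>x. indicator {0<..pi} x *\<^sub>R (x powr a))"
    by (subst (asm) integrable_completion) auto
  then have i2: "integrable lborel (\<lambda>x. indicator {0<..pi} (0 + (-1) * x) *\<^sub>R ((0 + (-1) * x) powr a))"
    by (subst lborel_integrable_real_affine_iff) auto
  have i1': "set_integrable lborel {0<..pi} (\<lambda>x. \<bar>x\<bar> powr a)"
    unfolding set_integrable_def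
    by (rule Bochner_Integration.integrable_cong[THEN iffD1, OF refl _ i1]) (auto split: split_indicator)
  have i2': "set_integrable lborel {-pi..<0} (\<lambda>x. \<bar>x\<bar> powr a)"
    unfolding set_integrable_def
    by (rule Bochner_Integration.integrable_cong[THEN iffD1, OF refl _ i2]) (auto split: split_indicator)
  have i3: "set_integrable lborel ({-pi<..<0} \<union> {0<..pi}) (\<lambda>x. \<bar>x\<bar> powr a)"
    by (rule set_integrable_Un[OF set_integrable_subset[OF i2', of "{-pi<..<0}"] i1']) auto
  show ?thesis
    unfolding set_integrable_def
    by (rule Bochner_Integration.integrable_cong[THEN iffD1, OF refl _ i3[unfolded set_integrable_def]])
       (auto split: split_indicator)
qed

lemma wfun_measurable[measurable]: "wfun e \<in> borel_measurable borel"
  unfolding wfun_def by measurable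

lemma wfun_integrable:
  assumes "0 < e" "e < 1/2"
  shows "set_integrable lborel Api (wfun e)"
proof -
  have "set_integrable lborel Api (\<lambda>x. (2 * pi) powr (2 * e) * \<bar>x\<bar> powr (- 2 * e))"
    using integrable_mult_right[OF abs_powr_integrable[of "- 2 * e", unfolded set_integrable_def], of "(2 * pi) powr (2 * e)"] assms
    unfolding set_integrable_def by (simp add: mult.left_commute)
  then show ?thesis
    unfolding set_integrable_def
  proof (rule Bochner_Integration.integrable_bound)
    show "(\<lambda>x. indicator Api x *\<^sub>R wfun e x) \<in> borel_measurable lborel" by measurable
    show "AE x in lborel. norm (indicator Api x *\<^sub>R wfun e x)
          \<le> norm (indicator Api x *\<^sub>R ((2 * pi) powr (2 * e) * \<bar>x\<bar> powr (- 2 * e)))"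
      using wfun_bound[OF assms(1)] wfun_nonneg by (auto split: split_indicator)
  qed
qed

lemma exp_ix_cis: "exp (\<i> * complex_of_real x * of_int m) = cis (x * of_int m)"
  by (simp add: cis_conv_exp mult.assoc)

lemma exp_int:
  fixes m :: int
  shows "(LINT x:Api|lborel. exp (\<i> * complex_of_real x * of_int m)) = (if m = 0 then 2 * pi else 0)"
proof -
  have "(LINT x:Api|lborel. exp (\<i> * complex_of_real x * of_int m)) = (LBINT x=-pi..pi. exp (\<i> * complex_of_real x * of_int m))"
    by (subst interval_integral_Ioc) auto
  also have "\<dots> = (if m = 0 then 2 * pi else 0)"
  proof (cases "m = 0")
    case True
    have "(LBINT x=-pi..pi. exp (\<i> * complex_of_real x * of_int m)) = (LBINT x=-pi..pi. 1)"
      using True by simp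
    also have "\<dots> = complex_of_real pi - complex_of_real (- pi)"
      by (rule interval_integral_FTC_finite[where F = "\<lambda>x. complex_of_real x"])
         (auto intro!: derivative_eq_intros continuous_intros)
    finally show ?thesis using True by simp
  next
    case False
    let ?F = "\<lambda>z::complex. exp (\<i> * z * of_int m) / (\<i> * of_int m)"
    have "(LBINT x=-pi..pi. exp (\<i> * complex_of_real x * of_int m)) = ?F (of_real pi) - ?F (of_real (- pi))"
    proof (rule interval_integral_FTC_finite[where F = "\<lambda>x. ?F (of_real x)"])
      show "continuous_on {min (- pi) pi..max (- pi) pi} (\<lambda>x. exp (\<i> * complex_of_real x * of_int m))"
        by (intro continuous_intros)
      fix x
      have "(?F has_field_derivative exp (\<i> * of_real x * of_int m)) (at (of_real x))"
        using False by (auto intro!: derivative_eq_intros)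
      then show "((\<lambda>x. ?F (of_real x)) has_vector_derivative exp (\<i> * complex_of_real x * of_int m))
          (at x within {min (- pi) pi..max (- pi) pi})"
        by (rule has_vector_derivative_real_field)
    qed
    also have "exp (\<i> * complex_of_real pi * of_int m) = exp (\<i> * complex_of_real (- pi) * of_int m)"
      unfolding exp_ix_cis by (simp add: complex_eq_iff)
    finally show ?thesis using False by simp
  qed
  finally show ?thesis .
qed

lemma measure_Api: "measure lborel Api = 2 * pi" by simp

lemma set_integrable_Api_cont:
  fixes f :: "real \<Rightarrow> complex"
  assumes "continuous_on {-pi..pi} f"
  shows "set_integrable lborel Api f"
proof -
  have "set_integrable lborel {-pi..pi} f"
    unfolding set_integrable_def by (rule borel_integrable_compact[OF _ assms]) simp
  then show ?thesis by (rule set_integrable_subset) auto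
qed

lemma series_integral_Api:
  fixes f :: "nat \<Rightarrow> real \<Rightarrow> complex"
  assumes int: "\<And>l. set_integrable lborel Api (f l)"
    and bnd: "\<And>l x. x \<in> Api \<Longrightarrow> norm (f l x) \<le> c l"
    and sc: "summable c"
    and sm: "\<And>x. x \<in> Api \<Longrightarrow> (\<lambda>l. f l x) sums g x"
  shows "(\<lambda>l. LINT x:Api|lborel. f l x) sums (LINT x:Api|lborel. g x)"
proof -
  let ?F = "\<lambda>l x. indicator Api x *\<^sub>R f l x"
  have c0: "0 \<le> c l" for l using bnd[of 0 l] by (meson greaterThanAtMost_iff norm_ge_zero order_trans pi_gt_zero neg_less_0_iff_less less_eq_real_def)
  have "(\<lambda>l. integral\<^sup>L lborel (?F l)) sums (\<integral>x. (\<Sum>l. ?F l x) \<partial>lborel)"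
  proof (rule sums_integral)
    show "integrable lborel (?F l)" for l using int[of l] by (simp add: set_integrable_def)
    show "AE x in lborel. summable (\<lambda>l. norm (?F l x))"
    proof (rule AE_I2)
      fix x show "summable (\<lambda>l. norm (?F l x))"
      proof (cases "x \<in> Api")
        case True
        then show ?thesis using bnd sc by (intro summable_comparison_test'[OF sc, of 0]) auto
      qed simp
    qed
    have le: "(\<integral>x. norm (?F l x) \<partial>lborel) \<le> c l * (2 * pi)" for l
    proof -
      have "(\<integral>x. norm (?F l x) \<partial>lborel) \<le> (\<integral>x. c l * indicator Api x \<partial>lborel)"
      proof (rule integral_mono)
        show "integrable lborel (\<lambda>x. norm (?F l x))"
          by (rule integrable_norm) (use int[of l] in \<open>simp add: set_integrable_def\<close>)
        show "integrable lborel (\<lambda>x. c l * indicator Api x :: real)"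
          by (intro integrable_mult_right integrable_real_indicator) auto
        fix x show "norm (?F l x) \<le> c l * indicator Api x" using bnd[of x l] by (auto split: split_indicator)
      qed
      also have "\<dots> = c l * (2 * pi)" by simp
      finally show ?thesis .
    qed
    show "summable (\<lambda>l. \<integral>x. norm (?F l x) \<partial>lborel)"
      by (rule summable_comparison_test'[OF summable_mult2[OF sc, of "2 * pi"], of 0]) (use le in auto)
  qed
  moreover have "(\<Sum>l. ?F l x) = indicator Api x *\<^sub>R g x" for x
  proof (cases "x \<in> Api")
    case True then show ?thesis using sm[OF True] by (simp add: sums_iff)
  qed simp
  ultimately show ?thesis by (simp add: set_lebesgue_integral_def)
qed

definition Gf :: "real \<Rightarrow> real \<Rightarrow> real \<Rightarrow> complex" where
  "Gf e r x = (1 - complex_of_real r * exp (\<i> * complex_of_real x)) powr (- complex_of_real e)"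

definition cf :: "real \<Rightarrow> real \<Rightarrow> nat \<Rightarrow> real" where
  "cf e r l = psi e l * r ^ l"

definition ei :: "real \<Rightarrow> int \<Rightarrow> complex" where
  "ei x m = exp (\<i> * complex_of_real x * of_int m)"

lemma ei_add: "ei x (a + b) = ei x a * ei x b"
  by (simp add: ei_def distrib_left exp_add)

lemma norm_ei[simp]: "norm (ei x m) = 1"
  by (simp add: ei_def norm_exp_eq_Re)

lemma cnj_ei: "cnj (ei x m) = ei x (- m)"
  by (simp add: ei_def exp_cnj)

lemma cont_ei[continuous_intros]: "continuous_on S (\<lambda>x. ei x m)"
  unfolding ei_def by (intro continuous_intros)

lemma exp_pow_ei: "exp (\<i> * complex_of_real x) ^ j = ei x (int j)"
  by (simp add: ei_def exp_of_nat_mult[symmetric] mult_ac)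

lemma cmod_1_r_lower:
  assumes "0 \<le> r" "r < 1"
  shows "1 - r \<le> cmod (1 - complex_of_real r * exp (\<i> * complex_of_real x))"
proof -
  have "cmod (complex_of_real r * exp (\<i> * complex_of_real x)) = r"
    using assms by (simp add: norm_mult norm_exp_eq_Re)
  then show ?thesis using norm_triangle_ineq2[of 1 "complex_of_real r * exp (\<i> * complex_of_real x)"]
    by simp
qed

lemma Gf_sums:
  assumes "0 \<le> r" "r < 1"
  shows "(\<lambda>j. complex_of_real (cf e r j) * ei x (int j)) sums Gf e r x"
proof -
  have "norm (complex_of_real r * exp (\<i> * complex_of_real x)) < 1"
    using assms by (simp add: norm_mult norm_exp_eq_Re)
  from psi_gen[OF this, of e]
  show ?thesis
    by (simp add: Gf_def cf_def power_mult_distrib exp_pow_ei mult_ac)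
qed

lemma cf_nonneg: "0 \<le> e \<Longrightarrow> 0 \<le> r \<Longrightarrow> 0 \<le> cf e r j"
  by (simp add: cf_def psi_nonneg)

lemma cf_le: "0 \<le> e \<Longrightarrow> e \<le> 1 \<Longrightarrow> 0 \<le> r \<Longrightarrow> cf e r j \<le> r ^ j"
  using psi_antimono[of e 0 j] psi_nonneg[of e j] unfolding cf_def
  by (simp add: mult_left_le_one_le)

lemma cf_summable: "0 \<le> e \<Longrightarrow> e \<le> 1 \<Longrightarrow> 0 \<le> r \<Longrightarrow> r < 1 \<Longrightarrow> summable (cf e r)"
  by (rule summable_comparison_test'[OF summable_geometric[of r], of 0]) (use cf_le cf_nonneg in auto)

lemma norm_Gf:
  assumes "0 \<le> r" "r < 1"
  shows "norm (Gf e r x) = cmod (1 - complex_of_real r * exp (\<i> * complex_of_real x)) powr (- e)"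
  unfolding Gf_def by (subst norm_powr_real_powr') auto

lemma norm_Gf_le:
  assumes "0 \<le> e" "0 \<le> r" "r < 1"
  shows "norm (Gf e r x) \<le> (1 - r) powr (- e)"
  unfolding norm_Gf[OF assms(2,3)]
  using cmod_1_r_lower[OF assms(2,3), of x] assms by (intro powr_mono2') auto

lemma cont_Gf:
  assumes "0 \<le> r" "r < 1"
  shows "continuous_on S (Gf e r)"
proof -
  have "Re (complex_of_real r * exp (\<i> * complex_of_real x)) \<le> r" for x
    using complex_Re_le_cmod[of "complex_of_real r * exp (\<i> * complex_of_real x)"] assms
    by (simp add: norm_mult norm_exp_eq_Re)
  then have "Re (1 - complex_of_real r * exp (\<i> * complex_of_real x)) > 0" for x
    using assms by (smt (verit) minus_complex.sel(1) one_complex.sel(1))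
  then have "1 - complex_of_real r * exp (\<i> * complex_of_real x) \<noteq> 0" for x
    by (metis zero_complex.sel(1) less_irrefl)
  with \<open>\<And>x. Re (1 - complex_of_real r * exp (\<i> * complex_of_real x)) > 0\<close>
  show ?thesis unfolding Gf_def
    by (intro continuous_on_powr_complex continuous_intros) (auto simp: less_imp_le)
qed

lemma sq_Gf:
  assumes "0 \<le> r" "r < 1"
  shows "complex_of_real (cmod (1 - complex_of_real r * exp (\<i> * complex_of_real x)) powr (- 2 * e))
       = Gf e r x * cnj (Gf e r x)"
proof -
  have "Gf e r x * cnj (Gf e r x) = complex_of_real ((norm (Gf e r x))\<^sup>2)"
    by (rule complex_norm_square[symmetric])
  also have "(norm (Gf e r x))\<^sup>2 = cmod (1 - complex_of_real r * exp (\<i> * complex_of_real x)) powr (- 2 * e)"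
    unfolding norm_Gf[OF assms] by (simp add: power2_eq_square powr_add[symmetric])
  finally show ?thesis by simp
qed

lemma inner_integral:
  assumes "0 \<le> e" "e \<le> 1" "0 \<le> r" "r < 1"
  shows "(LINT x:Api|lborel. ei x m * Gf e r x)
       = complex_of_real (2 * pi * (if m \<le> 0 then cf e r (nat (- m)) else 0))"
proof -
  let ?f = "\<lambda>j x. complex_of_real (cf e r j) * ei x (m + int j)"
  have A: "(\<lambda>j. LINT x:Api|lborel. ?f j x) sums (LINT x:Api|lborel. ei x m * Gf e r x)"
  proof (rule series_integral_Api)
    show "set_integrable lborel Api (?f l)" for l
      by (intro set_integrable_Api_cont continuous_intros)
    show "norm (?f l x) \<le> cf e r l" for l x
      using cf_nonneg[OF assms(1,3)] by (simp add: norm_mult)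
    show "summable (cf e r)" by (rule cf_summable[OF assms])
    fix x show "(\<lambda>l. ?f l x) sums (ei x m * Gf e r x)"
      using sums_mult[OF Gf_sums[OF assms(3,4), of e x], of "ei x m"]
      by (simp add: ei_add mult_ac)
  qed
  have B: "(LINT x:Api|lborel. ?f j x) = complex_of_real (cf e r j) * complex_of_real (if m + int j = 0 then 2 * pi else 0)" for j
    using exp_int[of "m + int j"] by (simp add: ei_def)
  from A have s: "(\<lambda>j. complex_of_real (cf e r j) * complex_of_real (if m + int j = 0 then 2 * pi else 0))
      sums (LINT x:Api|lborel. ei x m * Gf e r x)" by (simp only: B)
  have s2: "(\<lambda>j. complex_of_real (cf e r j) * complex_of_real (if m + int j = 0 then 2 * pi else 0))
      sums complex_of_real (2 * pi * (if m \<le> 0 then cf e r (nat (- m)) else 0))"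
  proof (cases "m \<le> 0")
    case True
    have "(\<lambda>j. complex_of_real (cf e r j) * complex_of_real (if m + int j = 0 then 2 * pi else 0))
        = (\<lambda>j. if j = nat (- m) then complex_of_real (cf e r j) * complex_of_real (2 * pi) else 0)"
      using True by (auto simp: fun_eq_iff)
    then show ?thesis using True sums_single[of "nat (- m)" "\<lambda>j. complex_of_real (cf e r j) * complex_of_real (2 * pi)"]
      by (simp add: mult_ac)
  next
    case False
    then have "(\<lambda>j. complex_of_real (cf e r j) * complex_of_real (if m + int j = 0 then 2 * pi else 0)) = (\<lambda>j. 0)"
      by (auto simp: fun_eq_iff)
    then show ?thesis using False by simp
  qed
  from sums_unique2[OF s s2] show ?thesis .
qed

definition Tr :: "real \<Rightarrow> real \<Rightarrow> nat \<Rightarrow> real" where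
  "Tr e r K = (\<Sum>j. cf e r j * cf e r (j + K))"

lemma Tr_summable:
  assumes "0 \<le> e" "e \<le> 1" "0 \<le> r" "r < 1"
  shows "summable (\<lambda>j. cf e r j * cf e r (j + K))"
proof (rule summable_comparison_test'[OF cf_summable[OF assms], of 0])
  fix j
  have "cf e r (j + K) \<le> 1" using cf_le[OF assms(1-3), of "j + K"] power_le_one[of r "j + K"] assms
    by linarith
  then show "norm (cf e r j * cf e r (j + K)) \<le> cf e r j"
    using cf_nonneg[OF assms(1,3)] by (simp add: mult_left_le)
qed

lemma outer_integral:
  assumes "0 \<le> e" "e \<le> 1" "0 \<le> r" "r < 1"
  shows "(LINT x:Api|lborel. ei x k * complex_of_real (cmod (1 - complex_of_real r * exp (\<i> * complex_of_real x)) powr (- 2 * e)))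
       = complex_of_real (2 * pi * Tr e r (nat \<bar>k\<bar>))"
proof -
  let ?f = "\<lambda>l x. complex_of_real (cf e r l) * (ei x (k - int l) * Gf e r x)"
  have cs: "(\<lambda>l. complex_of_real (cf e r l) * ei x (- int l)) sums cnj (Gf e r x)" for x
  proof -
    have "(\<lambda>l. cnj (complex_of_real (cf e r l) * ei x (int l))) sums cnj (Gf e r x)"
      using Gf_sums[OF assms(3,4), of e x] by (subst sums_cnj)
    then show ?thesis by (simp add: cnj_ei)
  qed
  have A: "(\<lambda>l. LINT x:Api|lborel. ?f l x)
      sums (LINT x:Api|lborel. ei x k * complex_of_real (cmod (1 - complex_of_real r * exp (\<i> * complex_of_real x)) powr (- 2 * e)))"
  proof (rule series_integral_Api)
    show "set_integrable lborel Api (?f l)" for l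
      by (intro set_integrable_Api_cont continuous_intros cont_Gf[OF assms(3,4)])
    show "norm (?f l x) \<le> cf e r l * (1 - r) powr (- e)" for l x
      using cf_nonneg[OF assms(1,3), of l] norm_Gf_le[OF assms(1,3,4), of x]
      by (simp add: norm_mult mult_left_mono)
    show "summable (\<lambda>l. cf e r l * (1 - r) powr (- e))"
      by (intro summable_mult2 cf_summable[OF assms])
    fix x
    have ek: "ei x (k - int l) = ei x k * ei x (- int l)" for l using ei_add[of x k "- int l"] by simp
    have E1: "(\<lambda>l. ?f l x) = (\<lambda>l. (ei x k * Gf e r x) * (complex_of_real (cf e r l) * ei x (- int l)))"
      by (rule ext) (simp add: ek mult_ac)
    have E2: "(ei x k * Gf e r x) * cnj (Gf e r x) = ei x k * complex_of_real (cmod (1 - complex_of_real r * exp (\<i> * complex_of_real x)) powr (- 2 * e))"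
      by (simp only: sq_Gf[OF assms(3,4)] mult.assoc)
    show "(\<lambda>l. ?f l x) sums (ei x k * complex_of_real (cmod (1 - complex_of_real r * exp (\<i> * complex_of_real x)) powr (- 2 * e)))"
      unfolding E1 E2[symmetric] by (rule sums_mult[OF cs[of x]])
  qed
  have B: "(LINT x:Api|lborel. ?f l x) = complex_of_real (cf e r l * (2 * pi * (if k - int l \<le> 0 then cf e r (nat (- (k - int l))) else 0)))" for l
    using inner_integral[OF assms, of "k - int l"] by simp
  from A have s1: "(\<lambda>l. complex_of_real (cf e r l * (2 * pi * (if k - int l \<le> 0 then cf e r (nat (- (k - int l))) else 0))))
      sums (LINT x:Api|lborel. ei x k * complex_of_real (cmod (1 - complex_of_real r * exp (\<i> * complex_of_real x)) powr (- 2 * e)))"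
    by (simp only: B)
  let ?g = "\<lambda>l. cf e r l * (2 * pi * (if k - int l \<le> 0 then cf e r (nat (- (k - int l))) else 0))"
  have base: "(\<lambda>j. 2 * pi * (cf e r j * cf e r (j + nat \<bar>k\<bar>))) sums (2 * pi * Tr e r (nat \<bar>k\<bar>))"
    unfolding Tr_def by (intro sums_mult summable_sums Tr_summable[OF assms])
  have s2: "?g sums (2 * pi * Tr e r (nat \<bar>k\<bar>))"
  proof (cases "k \<ge> 0")
    case True
    have z: "\<And>i. i < nat k \<Longrightarrow> ?g i = 0" using True by auto
    have "(\<lambda>i. ?g (i + nat k)) = (\<lambda>j. 2 * pi * (cf e r j * cf e r (j + nat \<bar>k\<bar>)))"
      using True by (auto simp: fun_eq_iff nat_add_distrib add.commute)
    with base have "(\<lambda>i. ?g (i + nat k)) sums (2 * pi * Tr e r (nat \<bar>k\<bar>))" by simp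
    then show ?thesis by (subst (asm) sums_zero_iff_shift[OF z])
  next
    case False
    have nk: "nat (int x - k) = x + nat (- k)" for x using False by simp
    have "?g = (\<lambda>j. 2 * pi * (cf e r j * cf e r (j + nat \<bar>k\<bar>)))"
      using False by (auto simp: fun_eq_iff nk)
    with base show ?thesis by simp
  qed
  then have s3: "(\<lambda>l. complex_of_real (?g l)) sums complex_of_real (2 * pi * Tr e r (nat \<bar>k\<bar>))"
    by (subst sums_of_real_iff)
  from sums_unique2[OF s1 s3] show ?thesis .
qed

lemma cmod_r_vs_1:
  assumes "0 \<le> r" "r < 1"
  shows "cmod (1 - exp (\<i> * complex_of_real x)) \<le> 2 * cmod (1 - complex_of_real r * exp (\<i> * complex_of_real x))"
proof -
  let ?E = "exp (\<i> * complex_of_real x)"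
  have nE: "cmod ?E = 1" by (simp add: norm_exp_eq_Re)
  have "cmod (1 - ?E) \<le> cmod (1 - complex_of_real r * ?E) + cmod (complex_of_real r * ?E - ?E)"
    using norm_triangle_ineq[of "1 - complex_of_real r * ?E" "complex_of_real r * ?E - ?E"] by simp
  also have "cmod (complex_of_real r * ?E - ?E) = 1 - r"
  proof -
    have h: "complex_of_real r * ?E - ?E = complex_of_real (r - 1) * ?E" by (simp add: algebra_simps)
    show ?thesis by (simp only: h norm_mult nE norm_of_real) (use assms in simp)
  qed
  also have "1 - r \<le> cmod (1 - complex_of_real r * ?E)" by (rule cmod_1_r_lower[OF assms])
  finally show ?thesis by simp
qed

definition rr :: "nat \<Rightarrow> real" where "rr n = 1 - 1 / (real n + 2)"

lemma rr_props: "0 \<le> rr n" "rr n < 1"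
  unfolding rr_def by (auto simp: field_simps)

lemma rr_lim: "rr \<longlonglongrightarrow> 1"
proof -
  have "(\<lambda>n. 1 / (real n + 2)) \<longlonglongrightarrow> 0"
    by real_asymp
  then show ?thesis unfolding rr_def using tendsto_diff[OF tendsto_const[of 1]] by fastforce
qed

lemma Tr_lim:
  assumes "0 \<le> e" "e < 1/2"
  shows "(\<lambda>n. Tr e (rr n) K) \<longlonglongrightarrow> Aco e K"
proof -
  have e1: "e \<le> 1" using assms by simp
  have int_eq: "Tr e r K = integral\<^sup>L (count_space UNIV) (\<lambda>j. cf e r j * cf e r (j + K))" if "0 \<le> r" "r < 1" for r
  proof -
    have "summable (\<lambda>j. norm (cf e r j * cf e r (j + K)))"
      using Tr_summable[OF assms(1) e1 that] cf_nonneg[OF assms(1) that(1)] by simp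
    then have "integrable (count_space UNIV) (\<lambda>j. cf e r j * cf e r (j + K))"
      by (simp add: integrable_count_space_nat_iff)
    from sums_integral_count_space_nat[OF this] show ?thesis unfolding Tr_def by (simp add: sums_iff)
  qed
  have sA: "summable (\<lambda>j. norm (psi e j * psi e (j + K)))"
    using psi_prod_summable[OF assms, of K] psi_nonneg[OF assms(1)] by simp
  then have intA: "integrable (count_space UNIV) (\<lambda>j. psi e j * psi e (j + K))"
    by (simp add: integrable_count_space_nat_iff)
  have A_eq: "Aco e K = integral\<^sup>L (count_space UNIV) (\<lambda>j. psi e j * psi e (j + K))"
    using sums_integral_count_space_nat[OF intA] unfolding Aco_def by (simp add: sums_iff)
  have "(\<lambda>n. integral\<^sup>L (count_space UNIV) (\<lambda>j. cf e (rr n) j * cf e (rr n) (j + K)))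
      \<longlonglongrightarrow> integral\<^sup>L (count_space UNIV) (\<lambda>j. psi e j * psi e (j + K))"
  proof (rule integral_dominated_convergence[where w = "\<lambda>j. psi e j * psi e (j + K)"])
    show "(\<lambda>j. psi e j * psi e (j + K)) \<in> borel_measurable (count_space UNIV)" by simp
    show "(\<lambda>j. cf e (rr n) j * cf e (rr n) (j + K)) \<in> borel_measurable (count_space UNIV)" for n by simp
    show "integrable (count_space UNIV) (\<lambda>j. psi e j * psi e (j + K))" by (rule intA)
    show "AE j in count_space UNIV. (\<lambda>n. cf e (rr n) j * cf e (rr n) (j + K)) \<longlonglongrightarrow> psi e j * psi e (j + K)"
    proof (rule AE_I2)
      fix j
      have "(\<lambda>n. cf e (rr n) j * cf e (rr n) (j + K)) \<longlonglongrightarrow> psi e j * 1 ^ j * (psi e (j + K) * 1 ^ (j + K))"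
        unfolding cf_def by (intro tendsto_intros rr_lim)
      then show "(\<lambda>n. cf e (rr n) j * cf e (rr n) (j + K)) \<longlonglongrightarrow> psi e j * psi e (j + K)" by simp
    qed
    show "AE j in count_space UNIV. norm (cf e (rr n) j * cf e (rr n) (j + K)) \<le> psi e j * psi e (j + K)" for n
    proof (rule AE_I2)
      fix j
      have a: "rr n ^ j \<le> 1" "rr n ^ (j + K) \<le> 1" using rr_props[of n] by (auto intro: power_le_one)
      have "norm (cf e (rr n) j * cf e (rr n) (j + K)) = (psi e j * rr n ^ j) * (psi e (j + K) * rr n ^ (j + K))"
        unfolding cf_def using psi_nonneg[OF assms(1)] rr_props[of n] by simp
      also have "\<dots> \<le> psi e j * psi e (j + K)"
        using a psi_nonneg[OF assms(1)] rr_props[of n]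
        by (intro mult_mono) (auto simp: mult_left_le)
      finally show "norm (cf e (rr n) j * cf e (rr n) (j + K)) \<le> psi e j * psi e (j + K)" .
    qed
  qed
  then show ?thesis using int_eq[OF rr_props] A_eq by simp
qed

lemma LHS_lim:
  assumes "0 < e" "e < 1/2"
  shows "(\<lambda>n. LINT x:Api|lborel. ei x k * complex_of_real (cmod (1 - complex_of_real (rr n) * exp (\<i> * complex_of_real x)) powr (- 2 * e)))
     \<longlonglongrightarrow> (LINT x:Api|lborel. ei x k * complex_of_real (wfun e x))"
  unfolding set_lebesgue_integral_def
proof (rule integral_dominated_convergence[where w = "\<lambda>x. indicator Api x * (2 powr (2 * e) * wfun e x)"])
  show "(\<lambda>x. indicator Api x *\<^sub>R (ei x k * complex_of_real (wfun e x))) \<in> borel_measurable lborel"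
    unfolding ei_def wfun_def by measurable
  show "(\<lambda>x. indicator Api x *\<^sub>R (ei x k * complex_of_real (cmod (1 - complex_of_real (rr n) * exp (\<i> * complex_of_real x)) powr (- 2 * e)))) \<in> borel_measurable lborel" for n
    unfolding ei_def by measurable
  show "integrable lborel (\<lambda>x. indicator Api x * (2 powr (2 * e) * wfun e x))"
    using integrable_mult_right[OF wfun_integrable[OF assms, unfolded set_integrable_def], of "2 powr (2 * e)"]
    by (simp add: mult_ac)
  show "AE x in lborel. (\<lambda>n. indicator Api x *\<^sub>R (ei x k * complex_of_real (cmod (1 - complex_of_real (rr n) * exp (\<i> * complex_of_real x)) powr (- 2 * e))))
     \<longlonglongrightarrow> indicator Api x *\<^sub>R (ei x k * complex_of_real (wfun e x))"
    using AE_lborel_singleton[of 0]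
  proof eventually_elim
    fix x :: real assume x0: "x \<noteq> 0"
    show "(\<lambda>n. indicator Api x *\<^sub>R (ei x k * complex_of_real (cmod (1 - complex_of_real (rr n) * exp (\<i> * complex_of_real x)) powr (- 2 * e))))
     \<longlonglongrightarrow> indicator Api x *\<^sub>R (ei x k * complex_of_real (wfun e x))"
    proof (cases "x \<in> Api")
      case True
      then have "\<bar>x\<bar> \<le> pi" by auto
      from cmod_1_exp_lower[OF this] x0 have pos: "cmod (1 - exp (\<i> * complex_of_real x)) \<noteq> 0"
        by (smt (verit) divide_pos_pos pi_gt_zero zero_less_abs_iff)
      have "(\<lambda>n. cmod (1 - complex_of_real (rr n) * exp (\<i> * complex_of_real x)))
          \<longlonglongrightarrow> cmod (1 - complex_of_real 1 * exp (\<i> * complex_of_real x))"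
        by (intro tendsto_intros rr_lim)
      then have L: "(\<lambda>n. cmod (1 - complex_of_real (rr n) * exp (\<i> * complex_of_real x)))
          \<longlonglongrightarrow> cmod (1 - exp (\<i> * complex_of_real x))" by simp
      have "(\<lambda>n. cmod (1 - complex_of_real (rr n) * exp (\<i> * complex_of_real x)) powr (- 2 * e))
          \<longlonglongrightarrow> cmod (1 - exp (\<i> * complex_of_real x)) powr (- 2 * e)"
        by (rule tendsto_powr[OF L tendsto_const pos])
      then show ?thesis unfolding wfun_def
        by (intro tendsto_scaleR[OF tendsto_const] tendsto_mult[OF tendsto_const] tendsto_of_real)
    qed simp
  qed
  show "AE x in lborel. norm (indicator Api x *\<^sub>R (ei x k * complex_of_real (cmod (1 - complex_of_real (rr n) * exp (\<i> * complex_of_real x)) powr (- 2 * e))))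
      \<le> indicator Api x * (2 powr (2 * e) * wfun e x)" for n
    using AE_lborel_singleton[of 0]
  proof eventually_elim
    fix x :: real assume x0: "x \<noteq> 0"
    show "norm (indicator Api x *\<^sub>R (ei x k * complex_of_real (cmod (1 - complex_of_real (rr n) * exp (\<i> * complex_of_real x)) powr (- 2 * e))))
      \<le> indicator Api x * (2 powr (2 * e) * wfun e x)"
    proof (cases "x \<in> Api")
      case True
      then have "\<bar>x\<bar> \<le> pi" by auto
      from cmod_1_exp_lower[OF this] x0 have pos: "0 < cmod (1 - exp (\<i> * complex_of_real x)) / 2"
        by (smt (verit) divide_pos_pos pi_gt_zero zero_less_abs_iff)
      have "cmod (1 - complex_of_real (rr n) * exp (\<i> * complex_of_real x)) powr (- 2 * e)
          \<le> (cmod (1 - exp (\<i> * complex_of_real x)) / 2) powr (- 2 * e)"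
        using cmod_r_vs_1[OF rr_props(1)[of n] rr_props(2)[of n], of x] pos assms by (intro powr_mono2') auto
      also have "\<dots> = cmod (1 - exp (\<i> * complex_of_real x)) powr (- 2 * e) / 2 powr (- 2 * e)"
        by (rule powr_divide)
      also have "\<dots> = 2 powr (2 * e) * wfun e x"
        unfolding wfun_def by (simp add: powr_minus divide_inverse)
      finally show ?thesis using True by (simp add: norm_mult)
    qed simp
  qed
qed

lemma fourier_wfun:
  assumes "0 < e" "e < 1/2"
  shows "(LINT x:Api|lborel. ei x k * complex_of_real (wfun e x)) = complex_of_real (2 * pi * Aco e (nat \<bar>k\<bar>))"
proof -
  have eq: "(LINT x:Api|lborel. ei x k * complex_of_real (cmod (1 - complex_of_real (rr n) * exp (\<i> * complex_of_real x)) powr (- 2 * e)))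
     = complex_of_real (2 * pi * Tr e (rr n) (nat \<bar>k\<bar>))" for n
    by (rule outer_integral) (use assms rr_props in auto)
  have "(\<lambda>n. complex_of_real (2 * pi * Tr e (rr n) (nat \<bar>k\<bar>))) \<longlonglongrightarrow> complex_of_real (2 * pi * Aco e (nat \<bar>k\<bar>))"
    by (intro tendsto_intros Tr_lim) (use assms in auto)
  moreover have "(\<lambda>n. complex_of_real (2 * pi * Tr e (rr n) (nat \<bar>k\<bar>))) \<longlonglongrightarrow> (LINT x:Api|lborel. ei x k * complex_of_real (wfun e x))"
    using LHS_lim[OF assms, of k] unfolding eq .
  ultimately show ?thesis by (rule LIMSEQ_unique[symmetric])
qed

lemma arfima_wfun: "arfima_sd s d x = s / (2 * pi) * wfun d x"
  by (simp add: arfima_sd_def wfun_def)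

lemma fcoeff_arfima:
  assumes "0 < d" "d < 1/2"
  shows "fcoeff (arfima_sd s d) k = complex_of_real (s * Aco d (nat \<bar>k\<bar>))"
proof -
  have "fcoeff (arfima_sd s d) k = (LINT x:Api|lborel. complex_of_real (s / (2 * pi)) * (ei x k * complex_of_real (wfun d x)))"
    unfolding fcoeff_def arfima_wfun ei_def by (simp add: mult_ac)
  also have "\<dots> = complex_of_real (s / (2 * pi)) * complex_of_real (2 * pi * Aco d (nat \<bar>k\<bar>))"
    by (simp only: set_integral_mult_right fourier_wfun[OF assms])
  also have "\<dots> = complex_of_real (s * Aco d (nat \<bar>k\<bar>))"
  proof -
    have "s / (2 * pi) * (2 * pi * Aco d (nat \<bar>k\<bar>)) = s * Aco d (nat \<bar>k\<bar>)" by (simp add: field_simps)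
    then show ?thesis by (metis of_real_mult)
  qed
  finally show ?thesis .
qed

lemma int_wfun:
  assumes "0 < e" "e < 1/2"
  shows "(LINT x:Api|lborel. wfun e x) = 2 * pi * Aco e 0"
proof -
  have "complex_of_real (LINT x:Api|lborel. wfun e x) = (LINT x:Api|lborel. ei x 0 * complex_of_real (wfun e x))"
    by (simp add: ei_def set_integral_complex_of_real)
  also have "\<dots> = complex_of_real (2 * pi * Aco e 0)"
    using fourier_wfun[OF assms, of 0] by simp
  finally show ?thesis by (simp only: of_real_eq_iff)
qed

lemma powr_pow_Suc: "(c powr a) ^ (Suc n) = c powr (real (Suc n) * a)"
  by (induction n) (simp_all add: powr_add[symmetric] algebra_simps)

lemma int_prod:
  assumes "1 \<le> \<nu>" "0 < d1" "0 < d2" "real \<nu> * (d1 + d2) < 1/2"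
  shows "(LINT x:Api|lborel. (arfima_sd s1 d1 x * arfima_sd s2 d2 x) ^ \<nu>)
       = (s1 * s2 / (2 * pi)^2) ^ \<nu> * (2 * pi * Aco (real \<nu> * (d1 + d2)) 0)"
proof -
  obtain n where n: "\<nu> = Suc n" using assms(1) by (cases \<nu>) auto
  have eq: "(arfima_sd s1 d1 x * arfima_sd s2 d2 x) ^ \<nu> = (s1 * s2 / (2 * pi)^2) ^ \<nu> * wfun (real \<nu> * (d1 + d2)) x" for x
  proof -
    have "arfima_sd s1 d1 x * arfima_sd s2 d2 x = (s1 * s2 / (2 * pi)^2) * wfun (d1 + d2) x"
      unfolding arfima_wfun wfun_def by (simp add: powr_add[symmetric] power2_eq_square algebra_simps)
    then have "(arfima_sd s1 d1 x * arfima_sd s2 d2 x) ^ \<nu> = (s1 * s2 / (2 * pi)^2) ^ \<nu> * wfun (d1 + d2) x ^ \<nu>"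
      by (simp only: power_mult_distrib)
    also have "wfun (d1 + d2) x ^ \<nu> = wfun (real \<nu> * (d1 + d2)) x"
      unfolding wfun_def n powr_pow_Suc by (simp add: algebra_simps)
    finally show ?thesis .
  qed
  have "(LINT x:Api|lborel. (arfima_sd s1 d1 x * arfima_sd s2 d2 x) ^ \<nu>)
      = (LINT x:Api|lborel. (s1 * s2 / (2 * pi)^2) ^ \<nu> * wfun (real \<nu> * (d1 + d2)) x)"
    by (simp only: eq)
  also have "\<dots> = (s1 * s2 / (2 * pi)^2) ^ \<nu> * (LINT x:Api|lborel. wfun (real \<nu> * (d1 + d2)) x)"
    by (rule set_integral_mult_right)
  also have "(LINT x:Api|lborel. wfun (real \<nu> * (d1 + d2)) x) = 2 * pi * Aco (real \<nu> * (d1 + d2)) 0"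
    using assms by (intro int_wfun) auto
  finally show ?thesis .
qed

type_synonym kern = "int \<Rightarrow> int \<Rightarrow> ennreal"

definition comp :: "kern \<Rightarrow> kern \<Rightarrow> kern" where
  "comp K L s u = (\<integral>\<^sup>+t. K s t * L t u \<partial>count_space UNIV)"

definition kid :: kern where "kid s u = (if s = u then 1 else 0)"

fun kpow :: "kern \<Rightarrow> nat \<Rightarrow> kern" where
  "kpow K 0 = kid"
| "kpow K (Suc n) = comp (kpow K n) K"

lemma comp_assoc: "comp (comp K L) M = comp K (comp L M)"
proof (intro ext)
  fix s u
  have "comp (comp K L) M s u = (\<integral>\<^sup>+t. (\<integral>\<^sup>+t'. K s t' * L t' t * M t u \<partial>count_space UNIV) \<partial>count_space UNIV)"
    unfolding comp_def by (subst nn_integral_multc) auto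
  also have "\<dots> = (\<integral>\<^sup>+t'. (\<integral>\<^sup>+t. K s t' * L t' t * M t u \<partial>count_space UNIV) \<partial>count_space UNIV)"
    by (rule nn_integral_count_space_nn_integral) auto
  also have "\<dots> = comp K (comp L M) s u"
    unfolding comp_def by (subst nn_integral_cmult[symmetric]) (auto simp: mult.assoc)
  finally show "comp (comp K L) M s u = comp K (comp L M) s u" .
qed

lemma nn_int_single: "(\<integral>\<^sup>+t. (if s = t then a else 0) \<partial>count_space (UNIV::int set)) = a"
proof -
  have "(\<integral>\<^sup>+t. (if s = t then a else 0) \<partial>count_space (UNIV::int set)) = (\<Sum>t\<in>{s}. (if s = t then a else 0))"
    by (rule nn_integral_count_space') auto
  then show ?thesis by simp
qed

lemma comp_kid_left[simp]: "comp kid K = K"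
proof (intro ext)
  fix s u
  have "(\<integral>\<^sup>+t. (if s = t then 1 else 0) * K t u \<partial>count_space UNIV) = (\<integral>\<^sup>+t. (if s = t then K s u else 0) \<partial>count_space UNIV)"
    by (intro nn_integral_cong) auto
  then show "comp kid K s u = K s u" unfolding comp_def kid_def by (simp add: nn_int_single)
qed

lemma comp_kid_right[simp]: "comp K kid = K"
proof (intro ext)
  fix s u
  have "(\<integral>\<^sup>+t. K s t * (if t = u then 1 else 0) \<partial>count_space UNIV) = (\<integral>\<^sup>+t. (if u = t then K s u else 0) \<partial>count_space UNIV)"
    by (intro nn_integral_cong) auto
  then show "comp K kid s u = K s u" unfolding comp_def kid_def by (simp add: nn_int_single)
qed

lemma comp_add_left: "comp (\<lambda>s u. K s u + K' s u) L = (\<lambda>s u. comp K L s u + comp K' L s u)"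
  unfolding comp_def by (intro ext) (simp add: distrib_right nn_integral_add)

lemma comp_add_right: "comp L (\<lambda>s u. K s u + K' s u) = (\<lambda>s u. comp L K s u + comp L K' s u)"
  unfolding comp_def by (intro ext) (simp add: distrib_left nn_integral_add)

lemma comp_sum_left: "comp (\<lambda>s u. \<Sum>j\<in>A. K j s u) L = (\<lambda>s u. \<Sum>j\<in>A. comp (K j) L s u)"
  unfolding comp_def by (intro ext) (simp add: sum_distrib_right nn_integral_sum)

lemma comp_mono: "(\<And>s u. K s u \<le> K' s u) \<Longrightarrow> (\<And>s u. L s u \<le> L' s u) \<Longrightarrow> comp K L s u \<le> comp K' L' s u"
  unfolding comp_def by (intro nn_integral_mono mult_mono) auto

lemma comp_smult: "comp (\<lambda>s u. a * K s u) (\<lambda>s u. b * L s u) = (\<lambda>s u. (a * b) * comp K L s u)"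
proof (intro ext)
  fix s u
  have "comp (\<lambda>s u. a * K s u) (\<lambda>s u. b * L s u) s u = (\<integral>\<^sup>+t. (a * b) * (K s t * L t u) \<partial>count_space UNIV)"
    unfolding comp_def by (intro nn_integral_cong) (simp add: mult_ac)
  also have "\<dots> = (a * b) * comp K L s u" unfolding comp_def by (rule nn_integral_cmult) simp
  finally show "comp (\<lambda>s u. a * K s u) (\<lambda>s u. b * L s u) s u = (a * b) * comp K L s u" .
qed

definition trk :: "kern \<Rightarrow> kern" where "trk K s u = K u s"

lemma comp_trk: "comp (trk K) (trk L) = trk (comp L K)"
  unfolding comp_def trk_def by (intro ext) (simp add: mult.commute)

lemma trk_trk[simp]: "trk (trk K) = K" unfolding trk_def by simp

definition Ps :: "real \<Rightarrow> int \<Rightarrow> ennreal" where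
  "Ps e n = (if 0 \<le> n then ennreal (psi e (nat n)) else 0)"

definition Cker :: "real \<Rightarrow> kern" where "Cker e s m = Ps e (s - m)"

definition Ak :: "real \<Rightarrow> kern" where "Ak e = comp (Cker e) (trk (Cker e))"

lemma nat_int_diff_le: "x \<le> n \<Longrightarrow> nat (int n - int x) = n - x" by arith

lemma comp_C_C:
  assumes "0 \<le> a" "0 \<le> b"
  shows "comp (Cker a) (Cker b) = Cker (a + b)"
proof (intro ext)
  fix s u
  show "comp (Cker a) (Cker b) s u = Cker (a + b) s u"
  proof (cases "u \<le> s")
    case False
    have z: "Ps a (s - t) * Ps b (t - u) = 0" for t using False by (auto simp: Ps_def)
    show ?thesis using False by (simp add: comp_def Cker_def z) (simp add: Ps_def)
  next
    case True
    define n where "n = nat (s - u)"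
    have "comp (Cker a) (Cker b) s u = (\<Sum>t\<in>{u..s}. Ps a (s - t) * Ps b (t - u))"
      unfolding comp_def Cker_def by (rule nn_integral_count_space') (auto simp: Ps_def)
    also have "\<dots> = (\<Sum>k\<in>{..n}. Ps a (int k) * Ps b (int (n - k)))"
    proof (rule sum.reindex_bij_witness[where i = "\<lambda>k. s - int k" and j = "\<lambda>t. nat (s - t)"])
      fix t assume "t \<in> {u..s}"
      then show "s - int (nat (s - t)) = t" "nat (s - t) \<in> {..n}" by (auto simp: n_def)
      have nd: "n - nat (s - t) = nat (t - u)" using \<open>t \<in> {u..s}\<close> unfolding n_def by (subst nat_diff_distrib[symmetric]) auto
      show "Ps a (int (nat (s - t))) * Ps b (int (n - nat (s - t))) = Ps a (s - t) * Ps b (t - u)"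
        unfolding nd using \<open>t \<in> {u..s}\<close> by (simp add: n_def Ps_def of_nat_diff nat_diff_distrib)
    next
      fix k assume "k \<in> {..n}"
      then have "int k \<le> s - u" using True by (simp add: n_def)
      then show "nat (s - (s - int k)) = k" "s - int k \<in> {u..s}" by auto
    qed
    also have "\<dots> = (\<Sum>k\<in>{..n}. ennreal (psi a k * psi b (n - k)))"
      using assms by (intro sum.cong refl) (simp add: Ps_def ennreal_mult' psi_nonneg nat_int_diff_le)
    also have "\<dots> = ennreal (\<Sum>k\<in>{..n}. psi a k * psi b (n - k))"
      using assms by (intro sum_ennreal) (simp add: psi_nonneg)
    also have "\<dots> = Cker (a + b) s u"
      using True by (simp add: Cker_def Ps_def psi_conv n_def)
    finally show ?thesis .
  qed
qed

lemma comp_T_C: "comp (trk (Cker a)) (Cker b) = comp (Cker b) (trk (Cker a))"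
proof (intro ext)
  fix s u
  have bij: "bij_betw (\<lambda>t. s + u - t) (UNIV::int set) UNIV"
    by (rule bij_betwI[where g = "\<lambda>t. s + u - t"]) auto
  have "comp (trk (Cker a)) (Cker b) s u = (\<integral>\<^sup>+t. Ps a (t - s) * Ps b (t - u) \<partial>count_space UNIV)"
    unfolding comp_def trk_def Cker_def ..
  also have "\<dots> = (\<integral>\<^sup>+t. Ps a ((s + u - t) - s) * Ps b ((s + u - t) - u) \<partial>count_space UNIV)"
    by (rule nn_integral_bij_count_space[OF bij, symmetric])
  also have "\<dots> = comp (Cker b) (trk (Cker a)) s u"
    unfolding comp_def trk_def Cker_def by (intro nn_integral_cong) (simp add: mult.commute)
  finally show "comp (trk (Cker a)) (Cker b) s u = comp (Cker b) (trk (Cker a)) s u" .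
qed

lemma Ak_comp:
  assumes "0 \<le> a" "0 \<le> b"
  shows "comp (Ak a) (Ak b) = Ak (a + b)"
proof -
  have "comp (Ak a) (Ak b) = comp (Cker a) (comp (comp (trk (Cker a)) (Cker b)) (trk (Cker b)))"
    unfolding Ak_def by (simp add: comp_assoc)
  also have "\<dots> = comp (comp (Cker a) (Cker b)) (comp (trk (Cker a)) (trk (Cker b)))"
    unfolding comp_T_C by (simp add: comp_assoc)
  also have "\<dots> = comp (Cker (a + b)) (trk (Cker (a + b)))"
    using assms by (simp add: comp_C_C comp_trk add.commute)
  finally show ?thesis unfolding Ak_def .
qed

lemma Ak_0: "Ak 0 = kid"
proof (intro ext)
  fix s u
  have "Ak 0 s u = (\<integral>\<^sup>+t. (if s = t then (if u = s then 1 else 0) else 0) \<partial>count_space UNIV)"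
    unfolding Ak_def comp_def Cker_def trk_def by (intro nn_integral_cong) (auto simp: Ps_def psi_zero_exp)
  then show "Ak 0 s u = kid s u" by (simp add: nn_int_single kid_def)
qed

lemma Ak_sym: "Ak e s u = Ak e u s"
  unfolding Ak_def comp_def trk_def by (simp add: mult.commute)

lemma Ak_val_le:
  assumes "0 \<le> e" "e < 1/2" "u \<le> s"
  shows "Ak e s u = ennreal (Aco e (nat \<bar>s - u\<bar>))"
proof -
  define K where "K = nat (s - u)"
  let ?f = "\<lambda>t. Ps e (s - t) * Ps e (u - t)"
  have nk: "nat (s - (u - int x)) = x + K" for x using assms(3) by (simp add: K_def)
  have "Ak e s u = (\<integral>\<^sup>+t. ?f t \<partial>count_space UNIV)"
    unfolding Ak_def comp_def trk_def Cker_def ..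
  also have "\<dots> = (\<integral>\<^sup>+t. ?f t \<partial>count_space {..u})"
    by (subst nn_integral_count_space_indicator) (auto intro!: nn_integral_cong simp: Ps_def split: split_indicator)
  also have "\<dots> = (\<integral>\<^sup>+j. ?f (u - int j) \<partial>count_space UNIV)"
  proof (rule nn_integral_bij_count_space[symmetric])
    show "bij_betw (\<lambda>j. u - int j) UNIV {..u}"
      by (rule bij_betwI[where g = "\<lambda>t. nat (u - t)"]) auto
  qed
  also have "\<dots> = (\<integral>\<^sup>+j. ennreal (psi e j * psi e (j + K)) \<partial>count_space UNIV)"
    by (intro nn_integral_cong) (use assms nk in \<open>auto simp: Ps_def K_def ennreal_mult' psi_nonneg nat_add_distrib mult.commute add.commute\<close>)
  also have "\<dots> = (\<Sum>j. ennreal (psi e j * psi e (j + K)))"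
    by (rule nn_integral_count_space_nat)
  also have "\<dots> = ennreal (Aco e K)"
    unfolding Aco_def using assms psi_nonneg[of e]
    by (intro suminf_ennreal2 psi_prod_summable) auto
  finally show ?thesis using assms by (simp add: K_def)
qed

lemma Ak_val:
  assumes "0 \<le> e" "e < 1/2"
  shows "Ak e s u = ennreal (Aco e (nat \<bar>s - u\<bar>))"
proof (cases "u \<le> s")
  case True then show ?thesis using Ak_val_le[OF assms] by simp
next
  case False
  then show ?thesis using Ak_val_le[OF assms, of s u] Ak_sym[of e s u] by (simp add: abs_minus_commute)
qed

definition Jd :: "nat \<Rightarrow> int \<Rightarrow> bool" where "Jd T s \<longleftrightarrow> 0 \<le> s \<and> s < int T"

definition nJ :: "nat \<Rightarrow> int \<Rightarrow> ennreal" where "nJ T s = (if Jd T s then 0 else 1)"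

definition Yk :: "nat \<Rightarrow> kern \<Rightarrow> kern \<Rightarrow> kern" where
  "Yk T R1 R2 s u = (if Jd T s \<and> Jd T u then (\<integral>\<^sup>+t. R1 s t * R2 t u * (if Jd T t then 1 else 0) \<partial>count_space UNIV) else 0)"

definition Zk :: "nat \<Rightarrow> kern \<Rightarrow> kern \<Rightarrow> kern" where
  "Zk T R1 R2 s u = (\<integral>\<^sup>+t. R1 s t * R2 t u * (if Jd T s \<and> Jd T t \<and> Jd T u then 0 else 1) \<partial>count_space UNIV)"

lemma X_split: "comp R1 R2 s u = Yk T R1 R2 s u + Zk T R1 R2 s u"
proof (cases "Jd T s \<and> Jd T u")
  case True
  have "comp R1 R2 s u = (\<integral>\<^sup>+t. R1 s t * R2 t u * (if Jd T t then 1 else 0) + R1 s t * R2 t u * (if Jd T s \<and> Jd T t \<and> Jd T u then 0 else 1) \<partial>count_space UNIV)"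
    unfolding comp_def using True by (intro nn_integral_cong) auto
  also have "\<dots> = Yk T R1 R2 s u + Zk T R1 R2 s u"
    unfolding Yk_def Zk_def using True by (subst nn_integral_add) auto
  finally show ?thesis .
next
  case False
  then show ?thesis unfolding comp_def Yk_def Zk_def by (auto intro!: nn_integral_cong)
qed

lemma Y_le_X: "Yk T R1 R2 s u \<le> comp R1 R2 s u"
  using X_split[of R1 R2 s u T] by (simp add: add_increasing2)

lemma kpow_mono: "(\<And>s u. K s u \<le> K' s u) \<Longrightarrow> kpow K n s u \<le> kpow K' n s u"
proof (induction n arbitrary: s u)
  case 0 then show ?case by simp
next
  case (Suc n) then show ?case by (simp add: comp_mono)
qed

lemma kpow_Suc': "comp K (kpow K n) = kpow K (Suc n)"
proof (induction n)
  case 0 then show ?case by simp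
next
  case (Suc n)
  have "comp K (kpow K (Suc n)) = comp (comp K (kpow K n)) K" by (simp add: comp_assoc)
  also have "\<dots> = kpow K (Suc (Suc n))" using Suc by simp
  finally show ?case .
qed

fun Ek :: "kern \<Rightarrow> kern \<Rightarrow> kern \<Rightarrow> nat \<Rightarrow> kern" where
  "Ek X Y Z 0 = (\<lambda>s u. 0)"
| "Ek X Y Z (Suc n) = (\<lambda>s u. comp (kpow Y n) Z s u + comp (Ek X Y Z n) X s u)"

lemma kpow_split:
  assumes "\<And>s u. X s u = Y s u + Z s u"
  shows "kpow X n s u = kpow Y n s u + Ek X Y Z n s u"
proof (induction n arbitrary: s u)
  case 0 then show ?case by simp
next
  case (Suc n)
  have h: "kpow X n = (\<lambda>s u. kpow Y n s u + Ek X Y Z n s u)" using Suc by (intro ext)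
  have hX: "X = (\<lambda>s u. Y s u + Z s u)" using assms by (intro ext)
  have "kpow X (Suc n) s u = comp (kpow Y n) X s u + comp (Ek X Y Z n) X s u"
    by (simp add: h comp_add_left)
  also have "comp (kpow Y n) X s u = comp (kpow Y n) Y s u + comp (kpow Y n) Z s u"
    by (subst hX) (simp add: comp_add_right)
  finally show ?case by (simp add: add.assoc)
qed

lemma Ek_bound:
  assumes "\<And>s u. Y s u \<le> X s u"
  shows "Ek X Y Z n s u \<le> (\<Sum>j<n. comp (comp (kpow X j) Z) (kpow X (n - Suc j)) s u)"
proof (induction n arbitrary: s u)
  case 0 then show ?case by simp
next
  case (Suc n)
  have "Ek X Y Z (Suc n) s u = comp (kpow Y n) Z s u + comp (Ek X Y Z n) X s u" by simp
  also have "\<dots> \<le> comp (kpow X n) Z s u + comp (\<lambda>s u. \<Sum>j<n. comp (comp (kpow X j) Z) (kpow X (n - Suc j)) s u) X s u"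
    by (intro add_mono comp_mono kpow_mono assms Suc.IH order_refl)
  also have "comp (\<lambda>s u. \<Sum>j<n. comp (comp (kpow X j) Z) (kpow X (n - Suc j)) s u) X s u
      = (\<Sum>j<n. comp (comp (kpow X j) Z) (kpow X (Suc n - Suc j)) s u)"
  proof -
    have "comp (\<lambda>s u. \<Sum>j<n. comp (comp (kpow X j) Z) (kpow X (n - Suc j)) s u) X s u
        = (\<Sum>j<n. comp (comp (comp (kpow X j) Z) (kpow X (n - Suc j))) X s u)"
      by (simp add: comp_sum_left)
    also have "\<dots> = (\<Sum>j<n. comp (comp (kpow X j) Z) (kpow X (Suc n - Suc j)) s u)"
    proof (intro sum.cong refl)
      fix j assume "j \<in> {..<n}"
      then have "Suc n - Suc j = Suc (n - Suc j)" by simp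
      then show "comp (comp (comp (kpow X j) Z) (kpow X (n - Suc j))) X s u = comp (comp (kpow X j) Z) (kpow X (Suc n - Suc j)) s u"
        by (simp add: comp_assoc)
    qed
    finally show ?thesis .
  qed
  also have "comp (kpow X n) Z s u = comp (comp (kpow X n) Z) (kpow X (Suc n - Suc n)) s u" by simp
  finally show ?case by (simp add: add.commute)
qed

definition Dk :: "nat \<Rightarrow> kern" where "Dk T s u = (if s = u then nJ T s else 0)"

lemma comp_D_left: "comp (Dk T) K s u = nJ T s * K s u"
proof -
  have "comp (Dk T) K s u = (\<integral>\<^sup>+t. (if s = t then nJ T s * K s u else 0) \<partial>count_space UNIV)"
    unfolding comp_def Dk_def by (intro nn_integral_cong) auto
  then show ?thesis by (simp add: nn_int_single)
qed

lemma comp_D_right: "comp K (Dk T) s u = K s u * nJ T u"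
proof -
  have "comp K (Dk T) s u = (\<integral>\<^sup>+t. (if u = t then K s u * nJ T u else 0) \<partial>count_space UNIV)"
    unfolding comp_def Dk_def by (intro nn_integral_cong) auto
  then show ?thesis by (simp add: nn_int_single)
qed

lemma Z_bound:
  "Zk T R1 R2 s u \<le> comp (Dk T) (comp R1 R2) s u + comp (comp R1 (Dk T)) R2 s u + comp (comp R1 R2) (Dk T) s u"
proof -
  have ind: "(if Jd T s \<and> Jd T t \<and> Jd T u then 0 else 1) \<le> nJ T s + nJ T t + nJ T u" for t
    by (auto simp: nJ_def)
  have "Zk T R1 R2 s u \<le> (\<integral>\<^sup>+t. nJ T s * (R1 s t * R2 t u) + (R1 s t * nJ T t) * R2 t u + (R1 s t * R2 t u) * nJ T u \<partial>count_space UNIV)"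
    unfolding Zk_def
  proof (intro nn_integral_mono)
    fix t
    have "R1 s t * R2 t u * (if Jd T s \<and> Jd T t \<and> Jd T u then 0 else 1) \<le> R1 s t * R2 t u * (nJ T s + nJ T t + nJ T u)"
      by (intro mult_left_mono ind) simp
    then show "R1 s t * R2 t u * (if Jd T s \<and> Jd T t \<and> Jd T u then 0 else 1)
        \<le> nJ T s * (R1 s t * R2 t u) + R1 s t * nJ T t * R2 t u + R1 s t * R2 t u * nJ T u"
      by (simp add: distrib_left mult_ac)
  qed
  also have "\<dots> = nJ T s * comp R1 R2 s u + comp (comp R1 (Dk T)) R2 s u + comp R1 R2 s u * nJ T u"
    unfolding comp_def[of R1 R2] comp_def[of "comp R1 (Dk T)"] comp_D_right
    by (simp add: nn_integral_add nn_integral_cmult nn_integral_multc)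
  also have "\<dots> = comp (Dk T) (comp R1 R2) s u + comp (comp R1 (Dk T)) R2 s u + comp (comp R1 R2) (Dk T) s u"
    by (simp add: comp_D_left comp_D_right)
  finally show ?thesis .
qed

lemma diag_form: "comp (comp A (Dk T)) B s s = (\<integral>\<^sup>+u. A s u * nJ T u * B u s \<partial>count_space UNIV)"
  unfolding comp_def[of "comp A (Dk T)"] comp_D_right ..

lemma split_outside:
  fixes g :: "int \<Rightarrow> ennreal"
  shows "(\<integral>\<^sup>+u. nJ T u * g u \<partial>count_space UNIV)
     \<le> (\<integral>\<^sup>+j. g (- 1 - int j) \<partial>count_space UNIV) + (\<integral>\<^sup>+j. g (int T + int j) \<partial>count_space UNIV)"
proof -
  have "(\<integral>\<^sup>+u. nJ T u * g u \<partial>count_space UNIV)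
      \<le> (\<integral>\<^sup>+u. g u * indicator {..<0} u + g u * indicator {int T..} u \<partial>count_space UNIV)"
    by (intro nn_integral_mono) (auto simp: nJ_def Jd_def split: split_indicator)
  also have "\<dots> = (\<integral>\<^sup>+u. g u \<partial>count_space {..<0}) + (\<integral>\<^sup>+u. g u \<partial>count_space {int T..})"
    by (simp add: nn_integral_add nn_integral_count_space_indicator)
  also have "(\<integral>\<^sup>+u. g u \<partial>count_space {..<0}) = (\<integral>\<^sup>+j. g (- 1 - int j) \<partial>count_space UNIV)"
    by (rule nn_integral_bij_count_space[symmetric], rule bij_betwI[where g = "\<lambda>u. nat (- 1 - u)"]) auto
  also have "(\<integral>\<^sup>+u. g u \<partial>count_space {int T..}) = (\<integral>\<^sup>+j. g (int T + int j) \<partial>count_space UNIV)"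
    by (rule nn_integral_bij_count_space[symmetric], rule bij_betwI[where g = "\<lambda>u. nat (u - int T)"]) auto
  finally show ?thesis .
qed

lemma nn_sum_bound:
  fixes f h :: "nat \<Rightarrow> real"
  assumes "\<And>j. 0 \<le> f j" "\<And>j. f j \<le> h j" "summable h" "suminf h \<le> B"
  shows "(\<integral>\<^sup>+j. ennreal (f j) \<partial>count_space UNIV) \<le> ennreal B"
proof -
  have h0: "0 \<le> h j" for j using assms(1,2)[of j] by simp
  have "(\<integral>\<^sup>+j. ennreal (f j) \<partial>count_space UNIV) \<le> (\<integral>\<^sup>+j. ennreal (h j) \<partial>count_space UNIV)"
    using assms by (intro nn_integral_mono ennreal_leI) auto
  also have "\<dots> = ennreal (suminf h)"
    by (simp add: nn_integral_count_space_nat suminf_ennreal2[OF h0 assms(3)])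
  also have "\<dots> \<le> ennreal B" using assms(4) by (rule ennreal_leI)
  finally show ?thesis .
qed

lemma tail_est:
  assumes "0 \<le> e" "0 \<le> e'" "0 < e + e'" "e + e' < 1/2"
  shows "\<exists>C. \<forall>T. (\<Sum>s<T. \<integral>\<^sup>+u. nJ T u * ennreal (Aco e (nat \<bar>int s - u\<bar>) * Aco e' (nat \<bar>int s - u\<bar>)) \<partial>count_space UNIV)
           \<le> ennreal (C * real T powr (2 * (e + e')))"
proof -
  define \<delta> where "\<delta> = e + e'"
  define b where "b = 2 - 2 * \<delta>"
  have b1: "1 < b" using assms unfolding b_def \<delta>_def by simp
  obtain C1 where C1: "\<And>m. Aco e m \<le> C1 * (real m + 1) powr (2 * e - 1)"
    using Aco_bound[of e] assms by auto
  obtain C2 where C2: "\<And>m. Aco e' m \<le> C2 * (real m + 1) powr (2 * e' - 1)"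
    using Aco_bound[of e'] assms by auto
  have C10: "0 \<le> C1" using C1[of 0] Aco_nonneg[of e 0] assms by simp
  have C20: "0 \<le> C2" using C2[of 0] Aco_nonneg[of e' 0] assms by simp
  define C where "C = C1 * C2"
  have C0: "0 \<le> C" using C10 C20 by (simp add: C_def)
  define G where "G m = Aco e m * Aco e' m" for m
  have G0: "0 \<le> G m" for m unfolding G_def using Aco_nonneg[of e] Aco_nonneg[of e'] assms by simp
  have Gb: "G m \<le> C * (real m + 1) powr (- b)" for m
  proof -
    have "G m \<le> (C1 * (real m + 1) powr (2 * e - 1)) * (C2 * (real m + 1) powr (2 * e' - 1))"
      unfolding G_def using C1 C2 Aco_nonneg[of e m] Aco_nonneg[of e' m] assms C10
      by (intro mult_mono) auto
    also have "\<dots> = C * (real m + 1) powr (- b)"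
      by (simp add: C_def b_def \<delta>_def powr_add[symmetric] algebra_simps)
    finally show ?thesis .
  qed
  have tail: "(\<integral>\<^sup>+j. ennreal (G (j + m)) \<partial>count_space UNIV) \<le> ennreal (C * (real m powr (1 - b) / (b - 1)))"
    if "0 < m" for m
  proof (rule nn_sum_bound)
    show "0 \<le> G (j + m)" for j by (rule G0)
    show "G (j + m) \<le> C * (real (j + m) + 1) powr (- b)" for j by (rule Gb)
    show "summable (\<lambda>j. C * (real (j + m) + 1) powr (- b))"
      by (intro summable_mult sum_L2(1)[OF b1 that])
    show "(\<Sum>j. C * (real (j + m) + 1) powr (- b)) \<le> C * (real m powr (1 - b) / (b - 1))"
      unfolding suminf_mult[OF sum_L2(1)[OF b1 that]] using sum_L2(2)[OF b1 that] C0 by (rule mult_left_mono)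
  qed
  define K where "K = C / (b - 1)"
  have K0: "0 \<le> K" using C0 b1 by (simp add: K_def)
  have per_s: "(\<integral>\<^sup>+u. nJ T u * ennreal (G (nat \<bar>int s - u\<bar>)) \<partial>count_space UNIV)
      \<le> ennreal (K * (real s + 1) powr (2 * \<delta> - 1) + K * real (T - s) powr (2 * \<delta> - 1))" if "s < T" for s T
  proof -
    have "(\<integral>\<^sup>+u. nJ T u * ennreal (G (nat \<bar>int s - u\<bar>)) \<partial>count_space UNIV)
        \<le> (\<integral>\<^sup>+j. ennreal (G (nat \<bar>int s - (- 1 - int j)\<bar>)) \<partial>count_space UNIV)
          + (\<integral>\<^sup>+j. ennreal (G (nat \<bar>int s - (int T + int j)\<bar>)) \<partial>count_space UNIV)"
      by (rule split_outside)
    also have "(\<integral>\<^sup>+j. ennreal (G (nat \<bar>int s - (- 1 - int j)\<bar>)) \<partial>count_space UNIV)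
        = (\<integral>\<^sup>+j. ennreal (G (j + (s + 1))) \<partial>count_space UNIV)"
    proof (intro nn_integral_cong)
      fix j :: nat
      have "nat \<bar>int s - (- 1 - int j)\<bar> = j + (s + 1)" by arith
      then show "ennreal (G (nat \<bar>int s - (- 1 - int j)\<bar>)) = ennreal (G (j + (s + 1)))" by simp
    qed
    also have "(\<integral>\<^sup>+j. ennreal (G (nat \<bar>int s - (int T + int j)\<bar>)) \<partial>count_space UNIV)
        = (\<integral>\<^sup>+j. ennreal (G (j + (T - s))) \<partial>count_space UNIV)"
    proof (intro nn_integral_cong)
      fix j :: nat
      have "nat \<bar>int s - (int T + int j)\<bar> = j + (T - s)" using that by arith
      then show "ennreal (G (nat \<bar>int s - (int T + int j)\<bar>)) = ennreal (G (j + (T - s)))" by simp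
    qed
    also have "(\<integral>\<^sup>+j. ennreal (G (j + (s + 1))) \<partial>count_space UNIV) + (\<integral>\<^sup>+j. ennreal (G (j + (T - s))) \<partial>count_space UNIV)
        \<le> ennreal (C * (real (s + 1) powr (1 - b) / (b - 1))) + ennreal (C * (real (T - s) powr (1 - b) / (b - 1)))"
      using that by (intro add_mono tail) auto
    also have "\<dots> = ennreal (K * (real s + 1) powr (2 * \<delta> - 1) + K * real (T - s) powr (2 * \<delta> - 1))"
      using C0 b1 by (subst ennreal_plus[symmetric]) (auto simp: K_def b_def add.commute)
    finally show ?thesis .
  qed
  define C' where "C' = 2 * K / (2 * \<delta>)"
  show ?thesis
  proof (intro exI[of _ C'] allI)
    fix T
    have "(\<Sum>s<T. \<integral>\<^sup>+u. nJ T u * ennreal (Aco e (nat \<bar>int s - u\<bar>) * Aco e' (nat \<bar>int s - u\<bar>)) \<partial>count_space UNIV)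
        \<le> (\<Sum>s<T. ennreal (K * (real s + 1) powr (2 * \<delta> - 1) + K * real (T - s) powr (2 * \<delta> - 1)))"
      by (intro sum_mono) (use per_s in \<open>auto simp: G_def\<close>)
    also have "\<dots> = ennreal (\<Sum>s<T. K * (real s + 1) powr (2 * \<delta> - 1) + K * real (T - s) powr (2 * \<delta> - 1))"
      using K0 by (intro sum_ennreal) auto
    also have "(\<Sum>s<T. K * (real s + 1) powr (2 * \<delta> - 1) + K * real (T - s) powr (2 * \<delta> - 1))
        = 2 * K * (\<Sum>s<T. (real s + 1) powr (2 * \<delta> - 1))"
    proof -
      have "(\<Sum>s<T. real (T - s) powr (2 * \<delta> - 1)) = (\<Sum>s<T. (real s + 1) powr (2 * \<delta> - 1))"
      proof -
        have "(\<Sum>s<T. real (T - s) powr (2 * \<delta> - 1)) = (\<Sum>s<T. (\<lambda>i. (real i + 1) powr (2 * \<delta> - 1)) (T - Suc s))"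
          by (intro sum.cong refl) (auto simp: of_nat_diff)
        also have "\<dots> = (\<Sum>s<T. (real s + 1) powr (2 * \<delta> - 1))"
          by (rule sum.nat_diff_reindex)
        finally show ?thesis .
      qed
      then show ?thesis by (simp add: sum.distrib sum_distrib_left[symmetric])
    qed
    also have "\<dots> \<le> 2 * K * (real T powr (2 * \<delta>) / (2 * \<delta>))"
      using sum_L1[of "2 * \<delta>" T] assms K0 by (intro mult_left_mono) (auto simp: \<delta>_def)
    also have "\<dots> = C' * real T powr (2 * (e + e'))"
      by (simp add: C'_def \<delta>_def)
    finally show "(\<Sum>s<T. \<integral>\<^sup>+u. nJ T u * ennreal (Aco e (nat \<bar>int s - u\<bar>) * Aco e' (nat \<bar>int s - u\<bar>)) \<partial>count_space UNIV)
        \<le> ennreal (C' * real T powr (2 * (e + e')))"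
      by (simp add: ennreal_leI)
  qed
qed

definition Kc :: "real \<Rightarrow> real \<Rightarrow> kern" where "Kc a e s u = ennreal a * Ak e s u"

lemma comp_Kc:
  assumes "0 \<le> a" "0 \<le> b" "0 \<le> e" "0 \<le> e'"
  shows "comp (Kc a e) (Kc b e') = Kc (a * b) (e + e')"
  unfolding Kc_def[abs_def] comp_smult using assms by (simp add: Ak_comp ennreal_mult)

lemma kpow_Kc:
  assumes "0 \<le> a" "0 \<le> e"
  shows "kpow (Kc a e) n = Kc (a ^ n) (real n * e)"
proof (induction n)
  case 0 then show ?case by (simp add: Kc_def[abs_def] Ak_0)
next
  case (Suc n)
  then show ?case using assms by (simp add: comp_Kc algebra_simps)
qed

lemma Kc_val: "0 \<le> e \<Longrightarrow> e < 1/2 \<Longrightarrow> Kc a e s u = ennreal a * ennreal (Aco e (nat \<bar>s - u\<bar>))"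
  by (simp add: Kc_def Ak_val)

definition rk :: "real \<Rightarrow> real \<Rightarrow> nat \<Rightarrow> nat \<Rightarrow> real" where
  "rk s d i j = s * Aco d (nat \<bar>int i - int j\<bar>)"

definition yr :: "nat \<Rightarrow> real \<Rightarrow> real \<Rightarrow> real \<Rightarrow> real \<Rightarrow> nat \<Rightarrow> nat \<Rightarrow> real" where
  "yr T s1 d1 s2 d2 a b = (\<Sum>t<T. rk s1 d1 a t * rk s2 d2 t b)"

fun ypow :: "nat \<Rightarrow> real \<Rightarrow> real \<Rightarrow> real \<Rightarrow> real \<Rightarrow> nat \<Rightarrow> nat \<Rightarrow> nat \<Rightarrow> real" where
  "ypow T s1 d1 s2 d2 0 a b = (if a = b then 1 else 0)"
| "ypow T s1 d1 s2 d2 (Suc n) a b = (\<Sum>t<T. ypow T s1 d1 s2 d2 n a t * yr T s1 d1 s2 d2 t b)"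

lemma toeplitz_entry:
  assumes "0 < d" "d < 1/2" "a < T" "b < T"
  shows "toeplitz T (arfima_sd s d) $$ (a, b) = complex_of_real (rk s d a b)"
  using assms by (simp add: toeplitz_def fcoeff_arfima rk_def)

lemma prod_entry:
  assumes "0 < d1" "d1 < 1/2" "0 < d2" "d2 < 1/2" "a < T" "b < T"
  shows "(toeplitz T (arfima_sd s1 d1) * toeplitz T (arfima_sd s2 d2)) $$ (a, b) = complex_of_real (yr T s1 d1 s2 d2 a b)"
  using assms by (simp add: scalar_prod_def toeplitz_def fcoeff_arfima rk_def yr_def atLeast0LessThan of_real_sum)

lemma rk_nonneg: "0 \<le> s \<Longrightarrow> 0 \<le> d \<Longrightarrow> d < 1/2 \<Longrightarrow> 0 \<le> rk s d i j"
  by (simp add: rk_def Aco_nonneg)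

lemma yr_nonneg: "0 \<le> s1 \<Longrightarrow> 0 \<le> d1 \<Longrightarrow> d1 < 1/2 \<Longrightarrow> 0 \<le> s2 \<Longrightarrow> 0 \<le> d2 \<Longrightarrow> d2 < 1/2 \<Longrightarrow> 0 \<le> yr T s1 d1 s2 d2 a b"
  unfolding yr_def by (intro sum_nonneg mult_nonneg_nonneg rk_nonneg) auto

lemma ypow_nonneg: "0 \<le> s1 \<Longrightarrow> 0 \<le> d1 \<Longrightarrow> d1 < 1/2 \<Longrightarrow> 0 \<le> s2 \<Longrightarrow> 0 \<le> d2 \<Longrightarrow> d2 < 1/2 \<Longrightarrow> 0 \<le> ypow T s1 d1 s2 d2 n a b"
  by (induction n arbitrary: a b) (auto intro!: sum_nonneg mult_nonneg_nonneg yr_nonneg)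

lemma pow_entry:
  assumes "0 < d1" "d1 < 1/2" "0 < d2" "d2 < 1/2" "a < T" "b < T"
  shows "((toeplitz T (arfima_sd s1 d1) * toeplitz T (arfima_sd s2 d2)) ^\<^sub>m n) $$ (a, b) = complex_of_real (ypow T s1 d1 s2 d2 n a b)"
  using assms(5,6)
proof (induction n arbitrary: a b)
  case 0 then show ?case by (simp add: toeplitz_def)
next
  case (Suc n)
  let ?M = "toeplitz T (arfima_sd s1 d1) * toeplitz T (arfima_sd s2 d2)"
  have dims: "dim_row ?M = T" "dim_col ?M = T" by (simp_all add: toeplitz_def)
  have "(?M ^\<^sub>m Suc n) $$ (a, b) = (\<Sum>i\<in>{0..<T}. (?M ^\<^sub>m n) $$ (a, i) * ?M $$ (i, b))"
    using Suc.prems dims by (simp add: scalar_prod_def)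
  also have "\<dots> = (\<Sum>i<T. complex_of_real (ypow T s1 d1 s2 d2 n a i) * complex_of_real (yr T s1 d1 s2 d2 i b))"
    using Suc.prems by (intro sum.cong) (auto simp: Suc.IH prod_entry[OF assms(1-4)])
  also have "\<dots> = complex_of_real (ypow T s1 d1 s2 d2 (Suc n) a b)"
    by (simp add: of_real_sum)
  finally show ?case .
qed

definition Yc :: "nat \<Rightarrow> real \<Rightarrow> real \<Rightarrow> real \<Rightarrow> real \<Rightarrow> kern" where
  "Yc T s1 d1 s2 d2 = Yk T (Kc s1 d1) (Kc s2 d2)"

lemma Y_out: "\<not> Jd T s \<or> \<not> Jd T u \<Longrightarrow> Yc T s1 d1 s2 d2 s u = 0"
  by (auto simp: Yc_def Yk_def)

lemma sum_int_image:
  fixes f :: "int \<Rightarrow> ennreal"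
  assumes "\<And>t. \<not> Jd T t \<Longrightarrow> f t = 0"
  shows "(\<integral>\<^sup>+t. f t \<partial>count_space UNIV) = (\<Sum>t<T. f (int t))"
proof -
  have "(\<integral>\<^sup>+t. f t \<partial>count_space UNIV) = (\<Sum>t\<in>int ` {..<T}. f t)"
  proof (rule nn_integral_count_space')
    fix t assume "t \<notin> int ` {..<T}"
    moreover have "Jd T t \<Longrightarrow> t \<in> int ` {..<T}"
      by (rule image_eqI[of _ int "nat t"]) (auto simp: Jd_def)
    ultimately show "f t = 0" using assms by blast
  qed auto
  also have "\<dots> = (\<Sum>t<T. f (int t))" by (subst sum.reindex) (auto simp: inj_on_def)
  finally show ?thesis .
qed

lemma Y_entry:
  assumes "0 \<le> s1" "0 \<le> d1" "d1 < 1/2" "0 \<le> s2" "0 \<le> d2" "d2 < 1/2" "a < T" "b < T"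
  shows "Yc T s1 d1 s2 d2 (int a) (int b) = ennreal (yr T s1 d1 s2 d2 a b)"
proof -
  have "Yc T s1 d1 s2 d2 (int a) (int b) = (\<integral>\<^sup>+t. Kc s1 d1 (int a) t * Kc s2 d2 t (int b) * (if Jd T t then 1 else 0) \<partial>count_space UNIV)"
    using assms by (simp add: Yc_def Yk_def Jd_def)
  also have "\<dots> = (\<Sum>t<T. Kc s1 d1 (int a) (int t) * Kc s2 d2 (int t) (int b) * (if Jd T (int t) then 1 else 0))"
    by (rule sum_int_image) simp
  also have "\<dots> = (\<Sum>t<T. ennreal (rk s1 d1 a t * rk s2 d2 t b))"
    using assms by (intro sum.cong refl) (auto simp: Kc_val Jd_def rk_def ennreal_mult' Aco_nonneg ennreal_mult)
  also have "\<dots> = ennreal (yr T s1 d1 s2 d2 a b)"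
    unfolding yr_def using assms by (intro sum_ennreal mult_nonneg_nonneg rk_nonneg) auto
  finally show ?thesis .
qed

lemma Ypow_entry:
  assumes "0 \<le> s1" "0 \<le> d1" "d1 < 1/2" "0 \<le> s2" "0 \<le> d2" "d2 < 1/2" "a < T" "b < T"
  shows "kpow (Yc T s1 d1 s2 d2) n (int a) (int b) = ennreal (ypow T s1 d1 s2 d2 n a b)"
  using assms(7,8)
proof (induction n arbitrary: b)
  case 0 then show ?case by (simp add: kid_def)
next
  case (Suc n)
  have "kpow (Yc T s1 d1 s2 d2) (Suc n) (int a) (int b)
      = (\<integral>\<^sup>+t. kpow (Yc T s1 d1 s2 d2) n (int a) t * Yc T s1 d1 s2 d2 t (int b) \<partial>count_space UNIV)"
    by (simp add: comp_def)
  also have "\<dots> = (\<Sum>t<T. kpow (Yc T s1 d1 s2 d2) n (int a) (int t) * Yc T s1 d1 s2 d2 (int t) (int b))"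
    by (rule sum_int_image) (simp add: Y_out)
  also have "\<dots> = (\<Sum>t<T. ennreal (ypow T s1 d1 s2 d2 n a t * yr T s1 d1 s2 d2 t b))"
    using Suc.prems assms by (intro sum.cong refl) (simp add: Suc.IH Y_entry ennreal_mult' ypow_nonneg)
  also have "\<dots> = ennreal (ypow T s1 d1 s2 d2 (Suc n) a b)"
    using assms by (simp add: sum_ennreal ypow_nonneg yr_nonneg)
  finally show ?case .
qed

lemma diag_Kc:
  assumes "0 \<le> a" "0 \<le> b" "0 \<le> e" "e < 1/2" "0 \<le> e'" "e' < 1/2"
  shows "comp (comp (Kc a e) (Dk T)) (Kc b e') s s
       = ennreal (a * b) * (\<integral>\<^sup>+u. nJ T u * ennreal (Aco e (nat \<bar>s - u\<bar>) * Aco e' (nat \<bar>s - u\<bar>)) \<partial>count_space UNIV)"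
proof -
  have "comp (comp (Kc a e) (Dk T)) (Kc b e') s s
      = (\<integral>\<^sup>+u. ennreal (a * b) * (nJ T u * ennreal (Aco e (nat \<bar>s - u\<bar>) * Aco e' (nat \<bar>s - u\<bar>))) \<partial>count_space UNIV)"
    unfolding diag_form
    using assms by (intro nn_integral_cong) (simp add: Kc_val abs_minus_commute ennreal_mult' ennreal_mult Aco_nonneg mult_ac)
  also have "\<dots> = ennreal (a * b) * (\<integral>\<^sup>+u. nJ T u * ennreal (Aco e (nat \<bar>s - u\<bar>) * Aco e' (nat \<bar>s - u\<bar>)) \<partial>count_space UNIV)"
    by (rule nn_integral_cmult) simp
  finally show ?thesis .
qed

lemma pair_bound:
  assumes "0 \<le> a" "0 \<le> b" "0 \<le> e" "0 \<le> e'" "0 < e + e'" "e + e' < 1/2"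
  shows "\<exists>C\<ge>0. \<forall>T. (\<Sum>s<T. comp (comp (Kc a e) (Dk T)) (Kc b e') (int s) (int s)) \<le> ennreal (C * real T powr (2 * (e + e')))"
proof -
  obtain C where C: "\<And>T. (\<Sum>s<T. \<integral>\<^sup>+u. nJ T u * ennreal (Aco e (nat \<bar>int s - u\<bar>) * Aco e' (nat \<bar>int s - u\<bar>)) \<partial>count_space UNIV)
           \<le> ennreal (C * real T powr (2 * (e + e')))"
    using tail_est[OF assms(3-6)] by blast
  define C' where "C' = a * b * max C 0"
  show ?thesis
  proof (intro exI[of _ C'] conjI allI)
    show "0 \<le> C'" using assms by (simp add: C'_def)
    fix T
    have "(\<Sum>s<T. comp (comp (Kc a e) (Dk T)) (Kc b e') (int s) (int s))
        = ennreal (a * b) * (\<Sum>s<T. \<integral>\<^sup>+u. nJ T u * ennreal (Aco e (nat \<bar>int s - u\<bar>) * Aco e' (nat \<bar>int s - u\<bar>)) \<partial>count_space UNIV)"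
      using assms by (simp add: diag_Kc sum_distrib_left)
    also have "\<dots> \<le> ennreal (a * b) * ennreal (max C 0 * real T powr (2 * (e + e')))"
    proof (rule mult_left_mono)
      have "ennreal (C * real T powr (2 * (e + e'))) \<le> ennreal (max C 0 * real T powr (2 * (e + e')))"
        by (intro ennreal_leI mult_right_mono) auto
      with C[of T] show "(\<Sum>s<T. \<integral>\<^sup>+u. nJ T u * ennreal (Aco e (nat \<bar>int s - u\<bar>) * Aco e' (nat \<bar>int s - u\<bar>)) \<partial>count_space UNIV)
           \<le> ennreal (max C 0 * real T powr (2 * (e + e')))" by (rule order_trans)
    qed simp
    also have "\<dots> = ennreal (C' * real T powr (2 * (e + e')))"
      using assms by (simp add: C'_def ennreal_mult[symmetric] mult_ac)
    finally show "(\<Sum>s<T. comp (comp (Kc a e) (Dk T)) (Kc b e') (int s) (int s)) \<le> ennreal (C' * real T powr (2 * (e + e')))" .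
  qed
qed

lemma sum_exists:
  fixes f :: "nat \<Rightarrow> nat \<Rightarrow> ennreal"
  assumes "\<And>j. j < n \<Longrightarrow> \<exists>C\<ge>0. \<forall>T. f j T \<le> ennreal (C * g T)" "\<And>T. 0 \<le> g T"
  shows "\<exists>C\<ge>0. \<forall>T. (\<Sum>j<n. f j T) \<le> ennreal (C * g T)"
  using assms(1)
proof (induction n)
  case 0 then show ?case by (intro exI[of _ 0]) auto
next
  case (Suc n)
  obtain C1 where C1: "C1 \<ge> 0" "\<And>T. (\<Sum>j<n. f j T) \<le> ennreal (C1 * g T)" using Suc by auto
  obtain C2 where C2: "C2 \<ge> 0" "\<And>T. f n T \<le> ennreal (C2 * g T)" using Suc.prems[of n] by auto
  show ?case
  proof (intro exI[of _ "C1 + C2"] conjI allI)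
    fix T
    have "(\<Sum>j<Suc n. f j T) = (\<Sum>j<n. f j T) + f n T" by simp
    also have "\<dots> \<le> ennreal (C1 * g T) + ennreal (C2 * g T)"
      by (rule add_mono[OF C1(2)[of T] C2(2)[of T]])
    also have "\<dots> = ennreal ((C1 + C2) * g T)"
      using C1 C2 assms(2)[of T] by (subst ennreal_plus[symmetric]) (auto simp: distrib_right)
    finally show "(\<Sum>j<Suc n. f j T) \<le> ennreal ((C1 + C2) * g T)" .
  qed (use C1 C2 in auto)
qed

lemma ex_add:
  fixes A B :: "nat \<Rightarrow> ennreal"
  assumes "\<exists>C\<ge>0. \<forall>T. A T \<le> ennreal (C * g T)" "\<exists>C\<ge>0. \<forall>T. B T \<le> ennreal (C * g T)" "\<And>T. 0 \<le> g T"
  shows "\<exists>C\<ge>0. \<forall>T. A T + B T \<le> ennreal (C * g T)"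
proof -
  obtain C1 where C1: "C1 \<ge> 0" "\<And>T. A T \<le> ennreal (C1 * g T)" using assms(1) by auto
  obtain C2 where C2: "C2 \<ge> 0" "\<And>T. B T \<le> ennreal (C2 * g T)" using assms(2) by auto
  show ?thesis
  proof (intro exI[of _ "C1 + C2"] conjI allI)
    fix T
    have "A T + B T \<le> ennreal (C1 * g T) + ennreal (C2 * g T)" by (rule add_mono[OF C1(2) C2(2)])
    also have "\<dots> = ennreal ((C1 + C2) * g T)"
      using C1 C2 assms(3)[of T] by (subst ennreal_plus[symmetric]) (auto simp: distrib_right)
    finally show "A T + B T \<le> ennreal ((C1 + C2) * g T)" .
  qed (use C1 C2 in auto)
qed

lemma pair_bound':
  assumes "0 \<le> a" "0 \<le> b" "0 \<le> e" "0 \<le> e'" "e + e' = \<delta>" "0 < \<delta>" "\<delta> < 1/2"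
  shows "\<exists>C\<ge>0. \<forall>T. (\<Sum>s<T. comp (comp (Kc a e) (Dk T)) (Kc b e') (int s) (int s)) \<le> ennreal (C * real T powr (2 * \<delta>))"
  using pair_bound[of a b e e'] assms by simp

lemma error_bound:
  assumes "1 \<le> \<nu>" "0 < s1" "0 < s2" "0 < d1" "0 < d2" "real \<nu> * (d1 + d2) < 1/2"
  shows "\<exists>C\<ge>0. \<forall>T. (\<Sum>a<T. Ek (comp (Kc s1 d1) (Kc s2 d2)) (Yc T s1 d1 s2 d2) (Zk T (Kc s1 d1) (Kc s2 d2)) \<nu> (int a) (int a))
            \<le> ennreal (C * real T powr (2 * (real \<nu> * (d1 + d2))))"
proof -
  define c where "c = s1 * s2"
  define d where "d = d1 + d2"
  define \<delta> where "\<delta> = real \<nu> * d"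
  define R1 where "R1 = Kc s1 d1"
  define R2 where "R2 = Kc s2 d2"
  define X where "X = comp R1 R2"
  have c0: "0 \<le> c" using assms by (simp add: c_def)
  have d0: "0 \<le> d" using assms by (simp add: d_def)
  have \<delta>pos: "0 < \<delta>" using assms by (simp add: \<delta>_def d_def)
  have \<delta>half: "\<delta> < 1/2" using assms by (simp add: \<delta>_def d_def)
  have Xc: "X = Kc c d" unfolding X_def R1_def R2_def c_def d_def using assms by (simp add: comp_Kc)
  have Xp: "kpow X n = Kc (c ^ n) (real n * d)" for n unfolding Xc using c0 d0 by (rule kpow_Kc)
  define t1 where "t1 j T = (\<Sum>s<T. comp (comp (Kc (c ^ j) (real j * d)) (Dk T)) (Kc (c ^ Suc (\<nu> - Suc j)) (real (Suc (\<nu> - Suc j)) * d)) (int s) (int s))" for j T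
  define t2 where "t2 j T = (\<Sum>s<T. comp (comp (Kc (c ^ j * s1) (real j * d + d1)) (Dk T)) (Kc (s2 * c ^ (\<nu> - Suc j)) (d2 + real (\<nu> - Suc j) * d)) (int s) (int s))" for j T
  define t3 where "t3 j T = (\<Sum>s<T. comp (comp (Kc (c ^ Suc j) (real (Suc j) * d)) (Dk T)) (Kc (c ^ (\<nu> - Suc j)) (real (\<nu> - Suc j) * d)) (int s) (int s))" for j T
  have termb: "comp (comp (kpow X j) (Zk T R1 R2)) (kpow X m) s s
      \<le> comp (comp (Kc (c ^ j) (real j * d)) (Dk T)) (Kc (c ^ Suc m) (real (Suc m) * d)) s s
        + comp (comp (Kc (c ^ j * s1) (real j * d + d1)) (Dk T)) (Kc (s2 * c ^ m) (d2 + real m * d)) s s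
        + comp (comp (Kc (c ^ Suc j) (real (Suc j) * d)) (Dk T)) (Kc (c ^ m) (real m * d)) s s" for j m T s
  proof -
    let ?Zb = "\<lambda>s u. comp (Dk T) X s u + comp (comp R1 (Dk T)) R2 s u + comp X (Dk T) s u"
    have "comp (comp (kpow X j) (Zk T R1 R2)) (kpow X m) s s \<le> comp (comp (kpow X j) ?Zb) (kpow X m) s s"
      by (intro comp_mono order_refl) (use Z_bound[of T R1 R2] in \<open>simp add: X_def\<close>)
    also have "\<dots> = comp (comp (kpow X j) (comp (Dk T) X)) (kpow X m) s s
        + comp (comp (kpow X j) (comp (comp R1 (Dk T)) R2)) (kpow X m) s s
        + comp (comp (kpow X j) (comp X (Dk T))) (kpow X m) s s"
      by (simp add: comp_add_right comp_add_left)
    also have "comp (comp (kpow X j) (comp (Dk T) X)) (kpow X m) = comp (comp (kpow X j) (Dk T)) (kpow X (Suc m))"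
      by (simp add: comp_assoc kpow_Suc')
    also have "comp (comp (kpow X j) (comp (comp R1 (Dk T)) R2)) (kpow X m) = comp (comp (comp (kpow X j) R1) (Dk T)) (comp R2 (kpow X m))"
      by (simp add: comp_assoc)
    also have "comp (comp (kpow X j) (comp X (Dk T))) (kpow X m) = comp (comp (kpow X (Suc j)) (Dk T)) (kpow X m)"
      by (simp add: comp_assoc)
    also have "comp (kpow X j) R1 = Kc (c ^ j * s1) (real j * d + d1)"
      unfolding Xp R1_def using assms c0 d0 by (simp add: comp_Kc)
    also have "comp R2 (kpow X m) = Kc (s2 * c ^ m) (d2 + real m * d)"
      unfolding Xp R2_def using assms c0 d0 by (simp add: comp_Kc)
    finally show ?thesis unfolding Xp .
  qed
  have tb: "\<exists>C\<ge>0. \<forall>T. t1 j T + t2 j T + t3 j T \<le> ennreal (C * real T powr (2 * \<delta>))" if "j < \<nu>" for j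
  proof -
    have jd: "real j * d + real (Suc (\<nu> - Suc j)) * d = \<delta>"
      using that by (simp add: \<delta>_def of_nat_diff algebra_simps)
    have jd2: "real j * d + d1 + (d2 + real (\<nu> - Suc j) * d) = \<delta>"
      using that by (simp add: \<delta>_def d_def of_nat_diff algebra_simps)
    have jd3: "real (Suc j) * d + real (\<nu> - Suc j) * d = \<delta>"
      using that by (simp add: \<delta>_def of_nat_diff algebra_simps)
    have g0: "0 \<le> real T powr (2 * \<delta>)" for T by simp
    show ?thesis
      unfolding t1_def t2_def t3_def
      by (intro ex_add g0 pair_bound'[OF _ _ _ _ jd \<delta>pos \<delta>half] pair_bound'[OF _ _ _ _ jd2 \<delta>pos \<delta>half]
          pair_bound'[OF _ _ _ _ jd3 \<delta>pos \<delta>half]) (use assms c0 d0 in auto)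
  qed
  obtain C where C: "C \<ge> 0" "\<And>T. (\<Sum>j<\<nu>. t1 j T + t2 j T + t3 j T) \<le> ennreal (C * real T powr (2 * \<delta>))"
    using sum_exists[of \<nu> "\<lambda>j T. t1 j T + t2 j T + t3 j T" "\<lambda>T. real T powr (2 * \<delta>)"] tb by auto
  show ?thesis
  proof (intro exI[of _ C] conjI allI)
    fix T
    have YX: "\<And>s u. Yc T s1 d1 s2 d2 s u \<le> X s u" unfolding Yc_def X_def R1_def R2_def by (rule Y_le_X)
    have "(\<Sum>a<T. Ek X (Yc T s1 d1 s2 d2) (Zk T R1 R2) \<nu> (int a) (int a))
        \<le> (\<Sum>a<T. \<Sum>j<\<nu>. comp (comp (kpow X j) (Zk T R1 R2)) (kpow X (\<nu> - Suc j)) (int a) (int a))"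
      by (intro sum_mono Ek_bound YX)
    also have "\<dots> \<le> (\<Sum>a<T. \<Sum>j<\<nu>.
          comp (comp (Kc (c ^ j) (real j * d)) (Dk T)) (Kc (c ^ Suc (\<nu> - Suc j)) (real (Suc (\<nu> - Suc j)) * d)) (int a) (int a)
        + comp (comp (Kc (c ^ j * s1) (real j * d + d1)) (Dk T)) (Kc (s2 * c ^ (\<nu> - Suc j)) (d2 + real (\<nu> - Suc j) * d)) (int a) (int a)
        + comp (comp (Kc (c ^ Suc j) (real (Suc j) * d)) (Dk T)) (Kc (c ^ (\<nu> - Suc j)) (real (\<nu> - Suc j) * d)) (int a) (int a))"
      by (intro sum_mono termb)
    also have "\<dots> = (\<Sum>j<\<nu>. t1 j T + t2 j T + t3 j T)"
      unfolding t1_def t2_def t3_def by (subst sum.swap) (simp add: sum.distrib)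
    also have "\<dots> \<le> ennreal (C * real T powr (2 * \<delta>))" by (rule C(2))
    finally show "(\<Sum>a<T. Ek (comp (Kc s1 d1) (Kc s2 d2)) (Yc T s1 d1 s2 d2) (Zk T (Kc s1 d1) (Kc s2 d2)) \<nu> (int a) (int a))
            \<le> ennreal (C * real T powr (2 * (real \<nu> * (d1 + d2))))"
      by (simp add: X_def R1_def R2_def \<delta>_def d_def)
  qed (rule C(1))
qed

lemma const_eq:
  assumes "1 \<le> \<nu>" "0 < d1" "0 < d2" "real \<nu> * (d1 + d2) < 1/2"
  shows "(2 * pi) ^ (2 * \<nu> - 1) * (LINT x:{-pi<..pi}|lborel. (arfima_sd s1 d1 x * arfima_sd s2 d2 x) ^ \<nu>)
       = (s1 * s2) ^ \<nu> * Aco (real \<nu> * (d1 + d2)) 0"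
proof -
  have "(2 * pi) ^ (2 * \<nu> - 1) * (LINT x:{-pi<..pi}|lborel. (arfima_sd s1 d1 x * arfima_sd s2 d2 x) ^ \<nu>)
      = (2 * pi) ^ (2 * \<nu> - 1) * ((s1 * s2 / (2 * pi)^2) ^ \<nu> * (2 * pi * Aco (real \<nu> * (d1 + d2)) 0))"
    using int_prod[OF assms] by simp
  also have "\<dots> = ((2 * pi) ^ (2 * \<nu> - 1) * (2 * pi)) * (s1 * s2) ^ \<nu> / ((2 * pi)^2) ^ \<nu> * Aco (real \<nu> * (d1 + d2)) 0"
    by (simp add: power_divide field_simps)
  also have "(2 * pi) ^ (2 * \<nu> - 1) * (2 * pi) = ((2 * pi)^2) ^ \<nu>"
  proof -
    have "(2 * pi) ^ (2 * \<nu> - 1) * (2 * pi) = (2 * pi) ^ Suc (2 * \<nu> - 1)" by simp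
    also have "Suc (2 * \<nu> - 1) = 2 * \<nu>" using assms by simp
    finally show ?thesis by (simp add: power_mult)
  qed
  finally show ?thesis by simp
qed

lemma main_bound:
  assumes "1 \<le> \<nu>" "0 < s1" "0 < s2" "0 < d1" "d1 < 1/2" "0 < d2" "d2 < 1/2" "real \<nu> * (d1 + d2) < 1/2"
  shows "\<exists>C. \<forall>T\<ge>1. Delta \<nu> (arfima_sd s1 d1) (arfima_sd s2 d2) T \<le> C * real T powr (2 * (real \<nu> * (d1 + d2)) - 1)"
proof -
  define \<delta> where "\<delta> = real \<nu> * (d1 + d2)"
  define c where "c = (s1 * s2) ^ \<nu> * Aco \<delta> 0"
  have \<delta>0: "0 \<le> \<delta>" "\<delta> < 1/2" using assms by (simp_all add: \<delta>_def)
  have c0: "0 \<le> c" using assms \<delta>0 by (simp add: c_def Aco_nonneg)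
  obtain C where C: "C \<ge> 0" "\<And>T. (\<Sum>a<T. Ek (comp (Kc s1 d1) (Kc s2 d2)) (Yc T s1 d1 s2 d2) (Zk T (Kc s1 d1) (Kc s2 d2)) \<nu> (int a) (int a))
            \<le> ennreal (C * real T powr (2 * \<delta>))"
    using error_bound[of \<nu> s1 s2 d1 d2] assms unfolding \<delta>_def by auto
  show ?thesis
  proof (intro exI[of _ C] allI impI)
    fix T :: nat assume T1: "1 \<le> T"
    define y where "y a = ypow T s1 d1 s2 d2 \<nu> a a" for a
    define E where "E a = Ek (comp (Kc s1 d1) (Kc s2 d2)) (Yc T s1 d1 s2 d2) (Zk T (Kc s1 d1) (Kc s2 d2)) \<nu> (int a) (int a)" for a
    have split: "ennreal c = ennreal (y a) + E a" if "a < T" for a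
    proof -
      have XYZ: "\<And>s u. comp (Kc s1 d1) (Kc s2 d2) s u = Yc T s1 d1 s2 d2 s u + Zk T (Kc s1 d1) (Kc s2 d2) s u"
        unfolding Yc_def by (rule X_split)
      have "kpow (comp (Kc s1 d1) (Kc s2 d2)) \<nu> (int a) (int a) = ennreal c"
        using assms \<delta>0 by (simp add: comp_Kc kpow_Kc Kc_val c_def \<delta>_def ennreal_mult[symmetric] Aco_nonneg)
      moreover have "kpow (Yc T s1 d1 s2 d2) \<nu> (int a) (int a) = ennreal (y a)"
        unfolding y_def using assms that by (intro Ypow_entry) auto
      ultimately show ?thesis using kpow_split[OF XYZ, where n = \<nu> and s = "int a" and u = "int a"] by (simp add: E_def)
    qed
    have y0: "0 \<le> y a" for a unfolding y_def using assms by (intro ypow_nonneg) auto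
    have Efin: "E a < Orderings.top" if "a < T" for a
    proof -
      have "E a \<le> ennreal (y a) + E a" by (rule add_increasing) auto
      also have "\<dots> = ennreal c" using split[OF that] by simp
      finally show ?thesis by (rule order.strict_trans1) simp
    qed
    have cy: "c = y a + enn2real (E a)" if "a < T" for a
    proof -
      have "enn2real (ennreal c) = enn2real (ennreal (y a) + E a)" using split[OF that] by simp
      also have "\<dots> = y a + enn2real (E a)" using Efin[OF that] y0 by (simp add: enn2real_plus)
      finally show ?thesis using c0 by simp
    qed
    have sumE: "(\<Sum>a<T. c - y a) = enn2real (\<Sum>a<T. E a)"
    proof -
      have "(\<Sum>a<T. c - y a) = (\<Sum>a<T. enn2real (E a))" using cy by (intro sum.cong) auto
      also have "\<dots> = enn2real (\<Sum>a<T. E a)" using Efin by (subst enn2real_sum) auto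
      finally show ?thesis .
    qed
    also have "\<dots> \<le> C * real T powr (2 * \<delta>)"
      using C(2)[of T] C(1) by (intro enn2real_leI) (auto simp: E_def)
    finally have Sb: "(\<Sum>a<T. c - y a) \<le> C * real T powr (2 * \<delta>)" .
    have Sn: "0 \<le> (\<Sum>a<T. c - y a)" using cy by (intro sum_nonneg) (simp add: enn2real_nonneg)
    have tr: "mat_trace ((toeplitz T (arfima_sd s1 d1) * toeplitz T (arfima_sd s2 d2)) ^\<^sub>m \<nu>) = complex_of_real (\<Sum>a<T. y a)"
    proof -
      have dr: "dim_row ((toeplitz T (arfima_sd s1 d1) * toeplitz T (arfima_sd s2 d2)) ^\<^sub>m \<nu>) = T"
        by (simp add: toeplitz_def)
      show ?thesis unfolding mat_trace_def dr of_real_sum y_def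
        by (intro sum.cong refl pow_entry) (use assms in auto)
    qed
    have "Delta \<nu> (arfima_sd s1 d1) (arfima_sd s2 d2) T = \<bar>(\<Sum>a<T. y a) / real T - c\<bar>"
    proof -
      have "complex_of_real (\<Sum>a<T. y a) / of_nat T - complex_of_real c = complex_of_real ((\<Sum>a<T. y a) / real T - c)"
        by (simp only: of_real_diff of_real_divide of_real_of_nat_eq)
      then show ?thesis
        unfolding Delta_def tr const_eq[OF assms(1,4,6,8)] c_def[symmetric] \<delta>_def[symmetric] by (simp only: norm_of_real)
    qed
    also have "(\<Sum>a<T. y a) / real T - c = - ((\<Sum>a<T. c - y a) / real T)"
      using T1 by (simp add: sum_subtractf field_simps)
    also have "\<bar>- ((\<Sum>a<T. c - y a) / real T)\<bar> = (\<Sum>a<T. c - y a) / real T"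
      using Sn by simp
    also have "\<dots> \<le> C * real T powr (2 * \<delta>) / real T"
      using Sb T1 by (intro divide_right_mono) auto
    also have "\<dots> = C * real T powr (2 * \<delta> - 1)"
      using T1 by (simp add: powr_diff)
    finally show "Delta \<nu> (arfima_sd s1 d1) (arfima_sd s2 d2) T \<le> C * real T powr (2 * (real \<nu> * (d1 + d2)) - 1)"
      by (simp add: \<delta>_def)
  qed
qed

theorem theorem4p1:
  fixes \<nu> :: nat and s1 s2 d1 d2 :: real
  assumes "\<nu> \<ge> 1"
    and "0 < s1" and "0 < s2"
    and "0 < d1" and "d1 < 1/2" and "0 < d2" and "d2 < 1/2"
    and "d1 + d2 < 1 / (2 * real \<nu>)"
  shows "\<forall>\<epsilon>>0. (\<lambda>T. Delta \<nu> (arfima_sd s1 d1) (arfima_sd s2 d2) T)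
           \<in> O[at_top](\<lambda>T. real T powr (- (1 / (2 * real \<nu>) - (d1 + d2)) + \<epsilon>))"
proof (intro allI impI)
  fix \<epsilon> :: real assume \<epsilon>: "\<epsilon> > 0"
  have nu0: "real \<nu> \<ge> 1" using assms(1) by simp
  have h: "real \<nu> * (d1 + d2) < 1/2"
  proof -
    have "real \<nu> * (d1 + d2) < real \<nu> * (1 / (2 * real \<nu>))"
      using assms(8) nu0 by (intro mult_strict_left_mono) auto
    also have "\<dots> = 1/2" using nu0 by simp
    finally show ?thesis .
  qed
  obtain C where C: "\<And>T. T \<ge> 1 \<Longrightarrow> Delta \<nu> (arfima_sd s1 d1) (arfima_sd s2 d2) T \<le> C * real T powr (2 * (real \<nu> * (d1 + d2)) - 1)"
    using main_bound[OF assms(1-7) h] by blast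
  have expo: "2 * (real \<nu> * (d1 + d2)) - 1 \<le> - (1 / (2 * real \<nu>) - (d1 + d2)) + \<epsilon>"
  proof -
    have "(2 * real \<nu> - 1) * (d1 + d2) \<le> (2 * real \<nu> - 1) * (1 / (2 * real \<nu>))"
      using assms(8) nu0 by (intro mult_left_mono) auto
    also have "\<dots> = 1 - 1 / (2 * real \<nu>)" using nu0 by (simp add: field_simps)
    finally show ?thesis using \<epsilon> by (simp add: algebra_simps)
  qed
  show "(\<lambda>T. Delta \<nu> (arfima_sd s1 d1) (arfima_sd s2 d2) T)
           \<in> O[at_top](\<lambda>T. real T powr (- (1 / (2 * real \<nu>) - (d1 + d2)) + \<epsilon>))"
  proof (rule bigoI[where c = "max C 0"])
    show "\<forall>\<^sub>F T in at_top. norm (Delta \<nu> (arfima_sd s1 d1) (arfima_sd s2 d2) T)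
        \<le> max C 0 * norm (real T powr (- (1 / (2 * real \<nu>) - (d1 + d2)) + \<epsilon>))"
      using eventually_ge_at_top[of "1::nat"]
    proof eventually_elim
      fix T :: nat assume T1: "1 \<le> T"
      have D0: "0 \<le> Delta \<nu> (arfima_sd s1 d1) (arfima_sd s2 d2) T" by (simp add: Delta_def)
      have "Delta \<nu> (arfima_sd s1 d1) (arfima_sd s2 d2) T \<le> C * real T powr (2 * (real \<nu> * (d1 + d2)) - 1)"
        by (rule C[OF T1])
      also have "\<dots> \<le> max C 0 * real T powr (2 * (real \<nu> * (d1 + d2)) - 1)"
        by (intro mult_right_mono) auto
      also have "\<dots> \<le> max C 0 * real T powr (- (1 / (2 * real \<nu>) - (d1 + d2)) + \<epsilon>)"
        using T1 expo by (intro mult_left_mono powr_mono) auto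
      finally show "norm (Delta \<nu> (arfima_sd s1 d1) (arfima_sd s2 d2) T)
        \<le> max C 0 * norm (real T powr (- (1 / (2 * real \<nu>) - (d1 + d2)) + \<epsilon>))"
        using D0 by simp
    qed
  qed
qed

end
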